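(* Let $f:\mathbb{R}^{2}\to\mathbb{R}$ be smooth and either quasi normal or quasi split normal, and for $k_{1}\neq0$, $k_{2}\neq0$, $x,y\in\mathbb{R}$ let $F(k_{1},y)=\lim_{r\to\infty}\int_{-r}^{r}f(x,y)e^{-ik_{1}x}\,dx$ and $G(x,k_{2})=\lim_{r\to\infty}\int_{-r}^{r}f(x,y)e^{-ik_{2}y}\,dy$. Then for $k_{1}\neq0$, $k_{2}\neq0$ the integrals $F(k_{1},k_{2})=\int_{-\infty}^{\infty}F(k_{1},y)e^{-ik_{2}y}\,dy$ and $G(k_{1},k_{2})=\int_{-\infty}^{\infty}G(x,k_{2})e^{-ik_{1}x}\,dx$ are well defined, and $F(k_{1},k_{2})=G(k_{1},k_{2})=\lim_{m\to\infty,n\to\infty}\int_{-m}^{m}\int_{-n}^{n}f(x,y)e^{-ik_{1}x}e^{-ik_{2}y}\,dx\,dy.$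
   Context: One-variable notions: a smooth $g:\mathbb{R}\setminus V\to\mathbb{R}$, $V\subset\mathbb{R}$ bounded closed, is analytic at infinity if there exist $\epsilon_{1},\epsilon_{2}>0$ such that $g(1/t)=\sum_{n\geq1}a_{n}t^{n}$ for $0<t<\epsilon_{1}$ and $g(1/t)=\sum_{n\geq1}b_{n}t^{n}$ for $-\epsilon_{2}<t<0$, with real coefficients and both power series absolutely convergent on the respective intervals. Two-variable notions: for smooth $f:\mathbb{R}^{2}\to\mathbb{R}$, $f$ is of very moderate decrease if there is $C>0$ with $|f(x,y)|\leq\frac{C}{|(x,y)|}$ for $|(x,y)|>1$, and of moderate decrease if $|f(x,y)|\leq\frac{C}{|(x,y)|^{2}}$ for $|(x,y)|>1$. For fixed $x$ write $f_{x}(y)=f(x,y)$ and for fixed $y$ write $f_{y}(x)=f(x,y)$. Conditions: (i) for every $x$, $f_{x}$ is analytic at infinity; (ii) for every $y$, $f_{y}$ is analytic at infinity; (iii) $f$ is of very moderate decrease; (iv) $\frac{\partial f}{\partial x}$ and $\frac{\partial f}{\partial y}$ are of moderate decrease. $f$ is quasi normal if (i)–(iv) hold and (v)': for sufficiently large $x$, the zeros of $f_{x}$ are contained in a union $(-M_{x},-N_{x})\cup(N_{x},M_{x})$ of bounded intervals with $M_{x}-N_{x}$ uniformly bounded in $x$, and similarly for $(f_{x})'$, $(f_{x})''$ (each with its own such intervals), and for $f_{y},(f_{y})',(f_{y})''$ with sufficiently large $y$. $f$ is quasi split normal if (i)–(iv) hold and (v)'': for sufficiently large $(x,y)$, $f=f_{1}+f_{2}$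 with $f_{1},f_{2}$ quasi normal and $f,f_{1},f_{2}$ smooth. *)

theory Defs
  imports "HOL-Analysis.Analysis"
begin

definition partial_x :: "(real \<times> real \<Rightarrow> real) \<Rightarrow> real \<times> real \<Rightarrow> real" where
  "partial_x f = (\<lambda>(x, y). deriv (\<lambda>t. f (t, y)) x)"

definition partial_y :: "(real \<times> real \<Rightarrow> real) \<Rightarrow> real \<times> real \<Rightarrow> real" where
  "partial_y f = (\<lambda>(x, y). deriv (\<lambda>t. f (x, t)) y)"

text \<open>Smooth (C-infinity) functions on R^2: differentiable everywhere, with
  smooth partial derivatives (coinductively, so all partial derivatives of all
  orders exist and are continuous).\<close>
coinductive smooth2 :: "(real \<times> real \<Rightarrow> real) \<Rightarrow> bool" where
  "\<lbrakk> \<forall>z. f differentiable (at z); smooth2 (partial_x f); smooth2 (partial_y f) \<rbrakk>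
     \<Longrightarrow> smooth2 f"

definition analytic_at_infinity :: "(real \<Rightarrow> real) \<Rightarrow> bool" where
  "analytic_at_infinity g \<longleftrightarrow>
     (\<exists>e1>0. \<exists>e2>0. \<exists>a b :: nat \<Rightarrow> real.
        (\<forall>t. 0 < t \<and> t < e1 \<longrightarrow>
            summable (\<lambda>n. \<bar>a n * t ^ Suc n\<bar>) \<and> g (1 / t) = (\<Sum>n. a n * t ^ Suc n)) \<and>
        (\<forall>t. - e2 < t \<and> t < 0 \<longrightarrow>
            summable (\<lambda>n. \<bar>b n * t ^ Suc n\<bar>) \<and> g (1 / t) = (\<Sum>n. b n * t ^ Suc n)))"

definition very_moderate_decrease :: "(real \<times> real \<Rightarrow> real) \<Rightarrow> bool" where
  "very_moderate_decrease f \<longleftrightarrow>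
     (\<exists>C>0. \<forall>z. norm z > 1 \<longrightarrow> \<bar>f z\<bar> \<le> C / norm z)"

definition moderate_decrease :: "(real \<times> real \<Rightarrow> real) \<Rightarrow> bool" where
  "moderate_decrease f \<longleftrightarrow>
     (\<exists>C>0. \<forall>z. norm z > 1 \<longrightarrow> \<bar>f z\<bar> \<le> C / (norm z)\<^sup>2)"

definition basic_conditions :: "(real \<times> real \<Rightarrow> real) \<Rightarrow> bool" where
  "basic_conditions f \<longleftrightarrow>
     (\<forall>x. analytic_at_infinity (\<lambda>y. f (x, y))) \<and>
     (\<forall>y. analytic_at_infinity (\<lambda>x. f (x, y))) \<and>
     very_moderate_decrease f \<and>
     moderate_decrease (partial_x f) \<and> moderate_decrease (partial_y f)"

definition zeros_in_bands :: "real \<Rightarrow> (real \<Rightarrow> real) \<Rightarrow> bool" where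
  "zeros_in_bands B g \<longleftrightarrow>
     (\<exists>N M. 0 \<le> N \<and> N \<le> M \<and> M - N \<le> B \<and>
        {t. g t = 0} \<subseteq> {-M<..<-N} \<union> {N<..<M})"

definition condition_v' :: "(real \<times> real \<Rightarrow> real) \<Rightarrow> bool" where
  "condition_v' f \<longleftrightarrow>
     (\<exists>R B. \<forall>s. \<bar>s\<bar> \<ge> R \<longrightarrow>
        zeros_in_bands B (\<lambda>y. f (s, y)) \<and>
        zeros_in_bands B (deriv (\<lambda>y. f (s, y))) \<and>
        zeros_in_bands B (deriv (deriv (\<lambda>y. f (s, y)))) \<and>
        zeros_in_bands B (\<lambda>x. f (x, s)) \<and>
        zeros_in_bands B (deriv (\<lambda>x. f (x, s))) \<and>
        zeros_in_bands B (deriv (deriv (\<lambda>x. f (x, s)))))"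

definition quasi_normal :: "(real \<times> real \<Rightarrow> real) \<Rightarrow> bool" where
  "quasi_normal f \<longleftrightarrow> smooth2 f \<and> basic_conditions f \<and> condition_v' f"

definition quasi_split_normal :: "(real \<times> real \<Rightarrow> real) \<Rightarrow> bool" where
  "quasi_split_normal f \<longleftrightarrow> smooth2 f \<and> basic_conditions f \<and>
     (\<exists>R f1 f2. smooth2 f1 \<and> smooth2 f2 \<and> quasi_normal f1 \<and> quasi_normal f2 \<and>
        (\<forall>z. norm z \<ge> R \<longrightarrow> f z = f1 z + f2 z))"

definition fourier_x :: "(real \<times> real \<Rightarrow> real) \<Rightarrow> real \<Rightarrow> real \<Rightarrow> complex" where
  "fourier_x f k1 y = Lim at_top (\<lambda>r. integral {-r..r} (\<lambda>x. complex_of_real (f (x, y)) * cis (- k1 * x)))"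

definition fourier_y :: "(real \<times> real \<Rightarrow> real) \<Rightarrow> real \<Rightarrow> real \<Rightarrow> complex" where
  "fourier_y f x k2 = Lim at_top (\<lambda>r. integral {-r..r} (\<lambda>y. complex_of_real (f (x, y)) * cis (- k2 * y)))"

definition has_improper_integral_R :: "(real \<Rightarrow> complex) \<Rightarrow> complex \<Rightarrow> bool" where
  "has_improper_integral_R g L \<longleftrightarrow>
     (\<forall>a b. g integrable_on {a..b}) \<and>
     ((\<lambda>p. integral {fst p..snd p} g) \<longlongrightarrow> L) (at_bot \<times>\<^sub>F at_top)"

end

theory Submission
  imports Defs
begin

lemma cis_deriv:
  "((\<lambda>t. cis (- k * t)) has_vector_derivative (- \<i> * of_real k * cis (- k * t))) (at t within S)"
proof -
  have "((\<lambda>t. cis (- k * t)) has_derivative (\<lambda>h. (- k * h) *\<^sub>R (\<i> * cis (- k * t)))) (at t within S)"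
    by (intro derivative_intros) 
  then show ?thesis
    by (simp add: has_vector_derivative_def scaleR_conv_of_real algebra_simps)
qed

lemma ibp_cis:
  fixes \<phi> \<phi>' :: "real \<Rightarrow> real"
  assumes k: "k \<noteq> 0" and pq: "p \<le> q"
    and d: "\<And>t. t \<in> {p..q} \<Longrightarrow> (\<phi> has_real_derivative \<phi>' t) (at t)"
  shows "(\<lambda>t. of_real (\<phi>' t) * cis (- k * t)) integrable_on {p..q}"
    and "integral {p..q} (\<lambda>t. of_real (\<phi> t) * cis (- k * t)) =
         (\<i> / of_real k) * (of_real (\<phi> q) * cis (- k * q) - of_real (\<phi> p) * cis (- k * p))
         - (\<i> / of_real k) * integral {p..q} (\<lambda>t. of_real (\<phi>' t) * cis (- k * t))"
proof -
  define P where "P t = (\<i> / of_real k) * (of_real (\<phi> t) * cis (- k * t))" for t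
  define P' where "P' t = (\<i> / of_real k) * (of_real (\<phi>' t) * cis (- k * t)) + of_real (\<phi> t) * cis (- k * t)" for t
  have cont: "continuous_on {p..q} \<phi>"
    using d by (meson DERIV_continuous continuous_at_imp_continuous_on)
  have i1: "(\<lambda>t. of_real (\<phi> t) * cis (- k * t)) integrable_on {p..q}"
    by (intro integrable_continuous_interval continuous_intros cont)
  have "(P has_vector_derivative P' t) (at t within {p..q})" if "t \<in> {p..q}" for t
  proof -
    have d1: "((\<lambda>t. of_real (\<phi> t)) has_vector_derivative of_real (\<phi>' t)) (at t within {p..q})"
      using d[OF that] 
      by (metis has_field_derivative_imp_has_derivative has_real_derivative_iff_has_vector_derivative
          has_vector_derivative_at_within has_vector_derivative_of_real)
    have "((\<lambda>t. of_real (\<phi> t) * cis (- k * t)) has_vector_derivative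
        (of_real (\<phi> t) * (- \<i> * of_real k * cis (- k * t)) + of_real (\<phi>' t) * cis (- k * t))) (at t within {p..q})"
      using has_vector_derivative_mult[OF d1 cis_deriv] by simp
    then have "(P has_vector_derivative (\<i> / of_real k) * (of_real (\<phi> t) * (- \<i> * of_real k * cis (- k * t)) + of_real (\<phi>' t) * cis (- k * t))) (at t within {p..q})"
      unfolding P_def by (intro has_vector_derivative_mult_right)
    moreover have "(\<i> / of_real k) * (of_real (\<phi> t) * (- \<i> * of_real k * cis (- k * t)) + of_real (\<phi>' t) * cis (- k * t)) = P' t"
      using k by (simp add: P'_def field_simps)
    ultimately show ?thesis by simp
  qed
  then have ftc: "(P' has_integral (P q - P p)) {p..q}"
    by (intro fundamental_theorem_of_calculus pq)
  have "(\<lambda>t. P' t - of_real (\<phi> t) * cis (- k * t)) integrable_on {p..q}"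
    using ftc i1 by (intro integrable_diff) auto
  then have "(\<lambda>t. (\<i> / of_real k) * (of_real (\<phi>' t) * cis (- k * t))) integrable_on {p..q}"
    by (simp add: P'_def)
  then show i2: "(\<lambda>t. of_real (\<phi>' t) * cis (- k * t)) integrable_on {p..q}"
    using k by (subst (asm) integrable_on_mult_right_iff) auto
  have "integral {p..q} P' = P q - P p" using ftc by blast
  moreover have "integral {p..q} P' = (\<i> / of_real k) * integral {p..q} (\<lambda>t. of_real (\<phi>' t) * cis (- k * t))
     + integral {p..q} (\<lambda>t. of_real (\<phi> t) * cis (- k * t))"
    unfolding P'_def using i1 i2 by (subst integral_add) (auto intro!: integrable_on_divide integrable_on_mult_right)
  ultimately show "integral {p..q} (\<lambda>t. of_real (\<phi> t) * cis (- k * t)) =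
         (\<i> / of_real k) * (of_real (\<phi> q) * cis (- k * q) - of_real (\<phi> p) * cis (- k * p))
         - (\<i> / of_real k) * integral {p..q} (\<lambda>t. of_real (\<phi>' t) * cis (- k * t))"
    unfolding P_def by (simp add: algebra_simps)
qed


lemmas HK_norm_bound = Henstock_Kurzweil_Integration.integral_norm_bound_integral

lemma arctan_int_bound:
  fixes s p q :: real
  assumes s: "s > 0" and pq: "p \<le> q"
  shows "(\<lambda>x. 1 / (s\<^sup>2 + x\<^sup>2)) integrable_on {p..q}"
    and "integral {p..q} (\<lambda>x. 1 / (s\<^sup>2 + x\<^sup>2)) \<le> pi / s"
proof -
  have der: "((\<lambda>x. arctan (x / s) / s) has_real_derivative 1 / (s\<^sup>2 + x\<^sup>2)) (at x)" for x
  proof -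
    have "((\<lambda>x. arctan (x / s) / s) has_real_derivative (inverse (1 + (x/s)\<^sup>2) * (1 / s)) / s) (at x)"
      using s by (intro derivative_eq_intros) auto
    moreover have "(inverse (1 + (x/s)\<^sup>2) * (1 / s)) / s = 1 / (s\<^sup>2 + x\<^sup>2)"
    proof -
      have "s * (s * s) + s * (x * x) > 0" using s by (intro add_pos_nonneg) auto
      then show ?thesis using s by (simp add: field_simps power2_eq_square)
    qed
    ultimately show ?thesis by simp
  qed
  have hi: "((\<lambda>x. 1 / (s\<^sup>2 + x\<^sup>2)) has_integral (arctan (q / s) / s - arctan (p / s) / s)) {p..q}"
    by (rule fundamental_theorem_of_calculus[OF pq])
       (metis der has_real_derivative_iff_has_vector_derivative has_vector_derivative_at_within)
  then show "(\<lambda>x. 1 / (s\<^sup>2 + x\<^sup>2)) integrable_on {p..q}" by blast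
  have "arctan (q / s) / s - arctan (p / s) / s = (arctan (q / s) - arctan (p / s)) / s"
    by (simp add: diff_divide_distrib)
  also have "\<dots> \<le> pi / s"
    using s arctan_bounded[of "q/s"] arctan_bounded[of "p/s"] by (intro divide_right_mono) auto
  finally show "integral {p..q} (\<lambda>x. 1 / (s\<^sup>2 + x\<^sup>2)) \<le> pi / s"
    using hi by (simp add: integral_unique)
qed

lemma invsq_int_bound:
  fixes A u v :: real
  assumes A: "A > 0" and uv: "u \<le> v" and side: "A \<le> u \<or> v \<le> - A"
  shows "(\<lambda>y. 1 / y\<^sup>2) integrable_on {u..v}"
    and "integral {u..v} (\<lambda>y. 1 / y\<^sup>2) \<le> 1 / A"
proof -
  have nz: "y \<noteq> 0" if "y \<in> {u..v}" for y using that side A by auto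
  have "((\<lambda>y. - 1 / y) has_real_derivative 1 / y\<^sup>2) (at y)" if "y \<in> {u..v}" for y
  proof -
    have "((\<lambda>y. - 1 / y) has_real_derivative - (- (inverse (y ^ 2))) ) (at y)"
      using nz[OF that] by (intro derivative_eq_intros) (auto simp: power2_eq_square field_simps)
    then show ?thesis by (simp add: divide_inverse)
  qed
  then have hi: "((\<lambda>y. 1 / y\<^sup>2) has_integral ((- 1 / v) - (- 1 / u))) {u..v}"
    by (intro fundamental_theorem_of_calculus[OF uv])
       (metis has_real_derivative_iff_has_vector_derivative has_vector_derivative_at_within)
  then show "(\<lambda>y. 1 / y\<^sup>2) integrable_on {u..v}" by blast
  have "(- 1 / v) - (- 1 / u) \<le> 1 / A"
    using side
  proof
    assume "A \<le> u"
    then have "1 / u \<le> 1 / A" "0 < 1 / v" using A uv by (auto simp: frac_le)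
    then show ?thesis by (smt (verit) minus_divide_left)
  next
    assume h: "v \<le> - A"
    then have "u < 0" "v < 0" using A uv by auto
    have "- 1 / v \<le> 1 / A" using h A \<open>v < 0\<close> by (simp add: field_simps)
    moreover have "1 / u < 0" using \<open>u < 0\<close> by simp
    ultimately show ?thesis by (smt (verit) minus_divide_left)
  qed
  then show "integral {u..v} (\<lambda>y. 1 / y\<^sup>2) \<le> 1 / A"
    using hi by (simp add: integral_unique)
qed

lemma cont_no_zero_sign:
  fixes g :: "real \<Rightarrow> real"
  assumes "continuous_on {p..q} g" "\<forall>t\<in>{p..q}. g t \<noteq> 0"
  shows "(\<forall>t\<in>{p..q}. g t > 0) \<or> (\<forall>t\<in>{p..q}. g t < 0)"
proof (rule ccontr)
  assume "\<not> ?thesis"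
  then obtain a b where ab: "a \<in> {p..q}" "b \<in> {p..q}" "g a \<le> 0" "g b \<ge> 0"
    by (meson not_less)
  have "\<exists>t\<in>{p..q}. g t = 0"
  proof (cases "a \<le> b")
    case True
    then obtain t where "a \<le> t" "t \<le> b" "g t = 0"
      using IVT'[of g a 0 b] ab assms(1) continuous_on_subset[of "{p..q}" g "{a..b}"]
      by auto
    then show ?thesis using ab by (intro bexI[of _ t]) auto
  next
    case False
    then obtain t where "b \<le> t" "t \<le> a" "g t = 0"
      using IVT2'[of g a 0 b] ab assms(1) continuous_on_subset[of "{p..q}" g "{b..a}"]
      by auto
    then show ?thesis using ab by (intro bexI[of _ t]) auto
  qed
  then show False using assms(2) by auto
qed


lemma norm_ofreal_cis: "norm (of_real a * cis b) = \<bar>a\<bar>"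
  by (simp add: norm_mult)

lemma ftc_real:
  fixes g g' :: "real \<Rightarrow> real"
  assumes "p \<le> q" "\<And>t. (g has_real_derivative g' t) (at t)"
  shows "(g' has_integral (g q - g p)) {p..q}"
  by (intro fundamental_theorem_of_calculus[OF assms(1)])
     (metis assms(2) has_real_derivative_iff_has_vector_derivative has_vector_derivative_at_within)

lemma piece_bound:
  fixes g g' :: "real \<Rightarrow> real"
  assumes k: "k \<noteq> 0" and pq: "p \<le> q"
    and d: "\<And>t. (g has_real_derivative g' t) (at t)"
    and cg': "continuous_on UNIV g'"
    and S: "\<forall>t\<in>{p..q}. \<bar>g t\<bar> \<le> S"
    and cond: "q - p \<le> B \<or> (\<forall>t\<in>{p..q}. g' t \<noteq> 0)"
    and B: "B \<ge> 0"
  shows "norm (integral {p..q} (\<lambda>t. of_real (g t) * cis (- k * t))) \<le> (4 / \<bar>k\<bar> + B) * S"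
proof -
  have S0: "S \<ge> 0" using S pq by force
  have cg: "continuous_on UNIV g"
    using d by (meson DERIV_continuous continuous_at_imp_continuous_on)
  have ig: "(\<lambda>t. of_real (g t) * cis (- k * t)) integrable_on {p..q}"
    by (intro integrable_continuous_interval continuous_intros continuous_on_subset[OF cg]) auto
  from cond show ?thesis
  proof
    assume len: "q - p \<le> B"
    have "norm (integral {p..q} (\<lambda>t. of_real (g t) * cis (- k * t))) \<le> integral {p..q} (\<lambda>t. S)"
      by (rule HK_norm_bound[OF ig]) (use S in \<open>auto simp: norm_ofreal_cis\<close>)
    also have "\<dots> = (q - p) * S" using pq by simp
    also have "\<dots> \<le> B * S" using len S0 by (intro mult_right_mono) auto
    also have "\<dots> \<le> (4 / \<bar>k\<bar> + B) * S" using S0 by (intro mult_right_mono) auto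
    finally show ?thesis .
  next
    assume nz: "\<forall>t\<in>{p..q}. g' t \<noteq> 0"
    have ibp1: "(\<lambda>t. of_real (g' t) * cis (- k * t)) integrable_on {p..q}"
      and ibp2: "integral {p..q} (\<lambda>t. of_real (g t) * cis (- k * t)) =
         (\<i> / of_real k) * (of_real (g q) * cis (- k * q) - of_real (g p) * cis (- k * p))
         - (\<i> / of_real k) * integral {p..q} (\<lambda>t. of_real (g' t) * cis (- k * t))"
      using ibp_cis[OF k pq, of g g'] d by auto
    have iabs: "(\<lambda>t. \<bar>g' t\<bar>) integrable_on {p..q}"
      by (intro integrable_continuous_interval continuous_intros continuous_on_subset[OF cg']) auto
    have "integral {p..q} (\<lambda>t. \<bar>g' t\<bar>) = \<bar>g q - g p\<bar>"
    proof -
      have hi: "(g' has_integral (g q - g p)) {p..q}" by (rule ftc_real[OF pq d])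
      from cont_no_zero_sign[OF continuous_on_subset[OF cg' subset_UNIV] nz]
      show ?thesis
      proof
        assume "\<forall>t\<in>{p..q}. 0 < g' t"
        then have "integral {p..q} (\<lambda>t. \<bar>g' t\<bar>) = integral {p..q} g'"
          by (intro integral_cong) (metis abs_of_pos)
        moreover have "g q - g p \<ge> 0"
          using hi \<open>\<forall>t\<in>{p..q}. 0 < g' t\<close>
          by (metis has_integral_nonneg less_eq_real_def)
        ultimately show ?thesis using hi by (simp add: integral_unique)
      next
        assume "\<forall>t\<in>{p..q}. g' t < 0"
        then have "integral {p..q} (\<lambda>t. \<bar>g' t\<bar>) = integral {p..q} (\<lambda>t. - g' t)"
          by (intro integral_cong) (metis abs_of_neg)
        moreover have "((\<lambda>t. - g' t) has_integral - (g q - g p)) {p..q}"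
          using hi by (rule has_integral_neg)
        moreover then have "- (g q - g p) \<ge> 0"
          using \<open>\<forall>t\<in>{p..q}. g' t < 0\<close>
          by (metis has_integral_nonneg less_eq_real_def neg_0_less_iff_less)
        ultimately show ?thesis using hi by (simp add: integral_unique)
      qed
    qed
    then have n2: "norm (integral {p..q} (\<lambda>t. of_real (g' t) * cis (- k * t))) \<le> 2 * S"
    proof -
      have "norm (integral {p..q} (\<lambda>t. of_real (g' t) * cis (- k * t))) \<le> integral {p..q} (\<lambda>t. \<bar>g' t\<bar>)"
        by (rule HK_norm_bound[OF ibp1 iabs]) (auto simp: norm_ofreal_cis)
      also have "\<dots> \<le> 2 * S"
      proof -
        have "\<bar>g q\<bar> \<le> S" "\<bar>g p\<bar> \<le> S" using S pq by auto
        then show ?thesis using \<open>integral {p..q} (\<lambda>t. \<bar>g' t\<bar>) = \<bar>g q - g p\<bar>\<close> by linarith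
      qed
      finally show ?thesis .
    qed
    have n1: "norm (of_real (g q) * cis (- k * q) - of_real (g p) * cis (- k * p)) \<le> 2 * S"
    proof -
      have "norm (of_real (g q) * cis (- k * q) - of_real (g p) * cis (- k * p)) \<le> \<bar>g q\<bar> + \<bar>g p\<bar>"
        by (metis norm_ofreal_cis norm_triangle_ineq4)
      moreover have "\<bar>g q\<bar> \<le> S" "\<bar>g p\<bar> \<le> S" using S pq by auto
      ultimately show ?thesis by linarith
    qed
    have nk: "norm (\<i> / of_real k) = 1 / \<bar>k\<bar>" by (simp add: norm_divide)
    have "norm (integral {p..q} (\<lambda>t. of_real (g t) * cis (- k * t))) \<le>
        norm ((\<i> / of_real k) * (of_real (g q) * cis (- k * q) - of_real (g p) * cis (- k * p)))
        + norm ((\<i> / of_real k) * integral {p..q} (\<lambda>t. of_real (g' t) * cis (- k * t)))"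
      unfolding ibp2 by (rule norm_triangle_ineq4)
    also have "\<dots> \<le> (1 / \<bar>k\<bar>) * (2 * S) + (1 / \<bar>k\<bar>) * (2 * S)"
      unfolding norm_mult nk using n1 n2 by (intro add_mono mult_left_mono) auto
    also have "\<dots> \<le> (4 / \<bar>k\<bar> + B) * S" using S0 B by (simp add: field_simps)
    finally show ?thesis .
  qed
qed


lemmas HK_combine = Henstock_Kurzweil_Integration.integral_combine

lemma norm5: "norm (a + b + c + d + e) \<le> norm a + norm b + norm c + norm (d::'a::real_normed_vector) + norm e"
proof -
  have "norm (a + b + c + d + e) \<le> norm (a + b + c + d) + norm e" by (rule norm_triangle_ineq)
  moreover have "norm (a + b + c + d) \<le> norm (a + b + c) + norm d" by (rule norm_triangle_ineq)
  moreover have "norm (a + b + c) \<le> norm (a + b) + norm c" by (rule norm_triangle_ineq)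
  moreover have "norm (a + b) \<le> norm a + norm b" by (rule norm_triangle_ineq)
  ultimately show ?thesis by linarith
qed

lemma band_bound:
  fixes g g' :: "real \<Rightarrow> real"
  assumes k: "k \<noteq> 0" and uv: "u \<le> v"
    and d: "\<And>t. (g has_real_derivative g' t) (at t)"
    and cg': "continuous_on UNIV g'"
    and S: "\<forall>t\<in>{u..v}. \<bar>g t\<bar> \<le> S"
    and zb: "zeros_in_bands B g'"
  shows "norm (integral {u..v} (\<lambda>t. of_real (g t) * cis (- k * t))) \<le> 5 * ((4 / \<bar>k\<bar> + B) * S)"
proof -
  obtain N M where NM: "0 \<le> N" "N \<le> M" "M - N \<le> B" "{t. g' t = 0} \<subseteq> {-M<..<-N} \<union> {N<..<M}"
    using zb unfolding zeros_in_bands_def by blast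
  have B: "B \<ge> 0" using NM by linarith
  define cl where "cl t = max u (min v t)" for t
  define c1 c2 c3 c4 where "c1 = cl (-M)" "c2 = cl (-N)" "c3 = cl N" "c4 = cl M"
  have clmono: "cl a \<le> cl b" if "a \<le> b" for a b using that unfolding cl_def by linarith
  have cllip: "cl b - cl a \<le> b - a" if "a \<le> b" for a b using that uv unfolding cl_def by linarith
  have clrange: "u \<le> cl a" "cl a \<le> v" for a using uv unfolding cl_def by linarith+
  have ord: "u \<le> c1" "c1 \<le> c2" "c2 \<le> c3" "c3 \<le> c4" "c4 \<le> v"
    using NM uv clmono clrange unfolding c1_c2_c3_c4_def by auto
  have nz: "g' t \<noteq> 0" if "t \<le> -M \<or> (-N \<le> t \<and> t \<le> N) \<or> M \<le> t" for t
  proof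
    assume "g' t = 0"
    then have "t \<in> {-M<..<-N} \<union> {N<..<M}" using NM(4) by blast
    then show False using that NM(1,2) by auto
  qed
  let ?I = "\<lambda>p q. integral {p..q} (\<lambda>t. of_real (g t) * cis (- k * t))"
  let ?K = "(4 / \<bar>k\<bar> + B) * S"
  have pb: "norm (?I p q) \<le> ?K" if "u \<le> p" "p \<le> q" "q \<le> v"
     and "q - p \<le> B \<or> (\<forall>t\<in>{p..q}. g' t \<noteq> 0)" for p q
    by (rule piece_bound[OF k that(2) d cg' _ that(4) B]) (use S that in auto)
  have b1: "norm (?I u c1) \<le> ?K"
  proof (rule pb)
    show "c1 - u \<le> B \<or> (\<forall>t\<in>{u..c1}. g' t \<noteq> 0)"
    proof (cases "c1 = u")
      case True then show ?thesis using B by auto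
    next
      case False then have "c1 \<le> -M" unfolding c1_c2_c3_c4_def cl_def by linarith
      then show ?thesis using nz by auto
    qed
  qed (use ord in auto)
  have b2: "norm (?I c1 c2) \<le> ?K"
  proof (rule pb)
    have "c2 - c1 \<le> -N - (-M)" unfolding c1_c2_c3_c4_def using cllip[of "-M" "-N"] NM by linarith
    then show "c2 - c1 \<le> B \<or> (\<forall>t\<in>{c1..c2}. g' t \<noteq> 0)" using NM by auto
  qed (use ord in auto)
  have b3: "norm (?I c2 c3) \<le> ?K"
  proof (rule pb)
    show "c3 - c2 \<le> B \<or> (\<forall>t\<in>{c2..c3}. g' t \<noteq> 0)"
    proof (cases "c2 = c3")
      case True then show ?thesis using B by auto
    next
      case False then have "-N \<le> c2" "c3 \<le> N" using ord NM uv unfolding c1_c2_c3_c4_def cl_def by linarith+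
      then show ?thesis using nz by auto
    qed
  qed (use ord in auto)
  have b4: "norm (?I c3 c4) \<le> ?K"
  proof (rule pb)
    have "c4 - c3 \<le> M - N" unfolding c1_c2_c3_c4_def using cllip[of N M] NM by linarith
    then show "c4 - c3 \<le> B \<or> (\<forall>t\<in>{c3..c4}. g' t \<noteq> 0)" using NM by auto
  qed (use ord in auto)
  have b5: "norm (?I c4 v) \<le> ?K"
  proof (rule pb)
    show "v - c4 \<le> B \<or> (\<forall>t\<in>{c4..v}. g' t \<noteq> 0)"
    proof (cases "c4 = v")
      case True then show ?thesis using B by auto
    next
      case False then have "M \<le> c4" using ord NM uv unfolding c1_c2_c3_c4_def cl_def by linarith
      then show ?thesis using nz by auto
    qed
  qed (use ord in auto)
  have cg: "continuous_on UNIV g"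
    using d by (meson DERIV_continuous continuous_at_imp_continuous_on)
  have ig: "(\<lambda>t. of_real (g t) * cis (- k * t)) integrable_on {a..b}" for a b
    by (intro integrable_continuous_interval continuous_intros continuous_on_subset[OF cg]) auto
  have e1: "?I u v = ?I u c1 + ?I c1 v"
    by (rule HK_combine[symmetric, OF _ _ ig]) (use ord in linarith)+
  have e2: "?I c1 v = ?I c1 c2 + ?I c2 v"
    by (rule HK_combine[symmetric, OF _ _ ig]) (use ord in linarith)+
  have e3: "?I c2 v = ?I c2 c3 + ?I c3 v"
    by (rule HK_combine[symmetric, OF _ _ ig]) (use ord in linarith)+
  have e4: "?I c3 v = ?I c3 c4 + ?I c4 v"
    by (rule HK_combine[symmetric, OF _ _ ig]) (use ord in linarith)+
  have "?I u v = ?I u c1 + ?I c1 c2 + ?I c2 c3 + ?I c3 c4 + ?I c4 v"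
    unfolding e1 e2 e3 e4 by (simp only: add.assoc)
  then have "norm (?I u v) \<le> norm (?I u c1) + norm (?I c1 c2) + norm (?I c2 c3) + norm (?I c3 c4) + norm (?I c4 v)"
    using norm5[of "?I u c1" "?I c1 c2" "?I c2 c3" "?I c3 c4" "?I c4 v"] by (simp only:)
  then show ?thesis using b1 b2 b3 b4 b5 by linarith
qed


locale Yloc =
  fixes h hx hy :: "real \<Rightarrow> real \<Rightarrow> real" and k1 k2 :: real
  assumes k1: "k1 \<noteq> 0" and k2: "k2 \<noteq> 0"
    and cont_h: "continuous_on UNIV (\<lambda>z. h (fst z) (snd z))"
    and cont_hy: "continuous_on UNIV (\<lambda>z. hy (fst z) (snd z))"
    and der_x: "\<And>x y. ((\<lambda>t. h t y) has_real_derivative hx x y) (at x)"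
    and der_y: "\<And>x y. ((\<lambda>t. h x t) has_real_derivative hy x y) (at y)"
    and bnd: "\<exists>C. \<forall>x y. \<bar>h x y\<bar> \<le> C / (1 + \<bar>x\<bar>) \<and> \<bar>h x y\<bar> \<le> C / (1 + \<bar>y\<bar>) \<and>
               \<bar>hx x y\<bar> \<le> C / (1 + x\<^sup>2 + y\<^sup>2) \<and> \<bar>hy x y\<bar> \<le> C / (1 + x\<^sup>2 + y\<^sup>2)"
    and band: "\<exists>R K. \<forall>x u v A. R \<le> \<bar>x\<bar> \<longrightarrow> 0 < A \<longrightarrow> u \<le> v \<longrightarrow> (\<forall>y\<in>{u..v}. A \<le> \<bar>y\<bar>) \<longrightarrow>
               norm (integral {u..v} (\<lambda>y. of_real (hy x y) * cis (- k2 * y))) \<le> K / (1 + x\<^sup>2 + A\<^sup>2)"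
begin

definition "Cb = (SOME C. \<forall>x y. \<bar>h x y\<bar> \<le> C / (1 + \<bar>x\<bar>) \<and> \<bar>h x y\<bar> \<le> C / (1 + \<bar>y\<bar>) \<and>
               \<bar>hx x y\<bar> \<le> C / (1 + x\<^sup>2 + y\<^sup>2) \<and> \<bar>hy x y\<bar> \<le> C / (1 + x\<^sup>2 + y\<^sup>2))"

lemma Cb: "\<bar>h x y\<bar> \<le> Cb / (1 + \<bar>x\<bar>)" "\<bar>h x y\<bar> \<le> Cb / (1 + \<bar>y\<bar>)"
   "\<bar>hx x y\<bar> \<le> Cb / (1 + x\<^sup>2 + y\<^sup>2)" "\<bar>hy x y\<bar> \<le> Cb / (1 + x\<^sup>2 + y\<^sup>2)"
  using someI_ex[OF bnd] unfolding Cb_def by blast+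

lemma Cb_nonneg: "Cb \<ge> 0"
  using Cb(1)[of 0 0] by simp

definition "Rb = (SOME R. \<exists>K. \<forall>x u v A. R \<le> \<bar>x\<bar> \<longrightarrow> 0 < A \<longrightarrow> u \<le> v \<longrightarrow> (\<forall>y\<in>{u..v}. A \<le> \<bar>y\<bar>) \<longrightarrow>
               norm (integral {u..v} (\<lambda>y. of_real (hy x y) * cis (- k2 * y))) \<le> K / (1 + x\<^sup>2 + A\<^sup>2))"
definition "Kb = (SOME K. \<forall>x u v A. Rb \<le> \<bar>x\<bar> \<longrightarrow> 0 < A \<longrightarrow> u \<le> v \<longrightarrow> (\<forall>y\<in>{u..v}. A \<le> \<bar>y\<bar>) \<longrightarrow>
               norm (integral {u..v} (\<lambda>y. of_real (hy x y) * cis (- k2 * y))) \<le> K / (1 + x\<^sup>2 + A\<^sup>2))"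

lemma RKb: "Rb \<le> \<bar>x\<bar> \<Longrightarrow> 0 < A \<Longrightarrow> u \<le> v \<Longrightarrow> (\<forall>y\<in>{u..v}. A \<le> \<bar>y\<bar>) \<Longrightarrow>
    norm (integral {u..v} (\<lambda>y. of_real (hy x y) * cis (- k2 * y))) \<le> Kb / (1 + x\<^sup>2 + A\<^sup>2)"
proof -
  have "\<exists>K. \<forall>x u v A. Rb \<le> \<bar>x\<bar> \<longrightarrow> 0 < A \<longrightarrow> u \<le> v \<longrightarrow> (\<forall>y\<in>{u..v}. A \<le> \<bar>y\<bar>) \<longrightarrow>
               norm (integral {u..v} (\<lambda>y. of_real (hy x y) * cis (- k2 * y))) \<le> K / (1 + x\<^sup>2 + A\<^sup>2)"
    unfolding Rb_def by (rule someI_ex[OF band])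
  from someI_ex[OF this] show "Rb \<le> \<bar>x\<bar> \<Longrightarrow> 0 < A \<Longrightarrow> u \<le> v \<Longrightarrow> (\<forall>y\<in>{u..v}. A \<le> \<bar>y\<bar>) \<Longrightarrow>
    norm (integral {u..v} (\<lambda>y. of_real (hy x y) * cis (- k2 * y))) \<le> Kb / (1 + x\<^sup>2 + A\<^sup>2)"
    unfolding Kb_def by blast
qed

definition "R0 = max Rb 0"
definition "K0 = max Kb 0"

lemma RK0: "R0 \<le> \<bar>x\<bar> \<Longrightarrow> 0 < A \<Longrightarrow> u \<le> v \<Longrightarrow> (\<forall>y\<in>{u..v}. A \<le> \<bar>y\<bar>) \<Longrightarrow>
    norm (integral {u..v} (\<lambda>y. of_real (hy x y) * cis (- k2 * y))) \<le> K0 / (A\<^sup>2 + x\<^sup>2)"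
proof -
  assume a: "R0 \<le> \<bar>x\<bar>" "0 < A" "u \<le> v" "\<forall>y\<in>{u..v}. A \<le> \<bar>y\<bar>"
  have "norm (integral {u..v} (\<lambda>y. of_real (hy x y) * cis (- k2 * y))) \<le> Kb / (1 + x\<^sup>2 + A\<^sup>2)"
    using a by (intro RKb) (auto simp: R0_def)
  also have "\<dots> \<le> K0 / (1 + x\<^sup>2 + A\<^sup>2)"
    by (intro divide_right_mono) (auto simp: K0_def add_pos_nonneg)
  also have "\<dots> \<le> K0 / (A\<^sup>2 + x\<^sup>2)"
    using a(2) by (intro divide_left_mono) (auto simp: K0_def add_pos_nonneg)
  finally show ?thesis .
qed

lemma R0_nonneg: "R0 \<ge> 0" and K0_nonneg: "K0 \<ge> 0"
  by (auto simp: R0_def K0_def)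

lemma cont_h_x: "continuous_on S (\<lambda>x. h x y)"
proof -
  have "continuous_on UNIV ((\<lambda>z. h (fst z) (snd z)) \<circ> (\<lambda>x. (x, y)))"
    by (intro continuous_on_compose continuous_intros cont_h[THEN continuous_on_subset]) auto
  then show ?thesis by (auto simp: o_def intro: continuous_on_subset)
qed

lemma cont_F:
  "continuous_on S (\<lambda>z. of_real (h (fst z) (snd z)) * cis (- k1 * fst z) * cis (- k2 * snd z))"
  by (intro continuous_intros continuous_on_compose2[OF cont_h] continuous_on_subset[OF cont_h]) auto

lemma cont_Fy:
  "continuous_on S (\<lambda>z. of_real (hy (fst z) (snd z)) * cis (- k2 * snd z) * cis (- k1 * fst z))"
  by (intro continuous_intros continuous_on_compose2[OF cont_hy]) auto

end


context Yloc begin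

lemma lorentz_integrable: "(\<lambda>x. c * (1 / (s\<^sup>2 + x\<^sup>2))) integrable_on {a..b}" if "s > 0" for c s a b :: real
proof (cases "a \<le> b")
  case True
  then show ?thesis using arctan_int_bound(1)[OF that True] by (intro integrable_on_mult_right)
next
  case False
  then show ?thesis by (simp add: integrable_on_empty)
qed

lemma xint_bound:
  assumes y: "y \<noteq> 0" and ab: "a \<le> b"
  shows "norm (integral {a..b} (\<lambda>x. of_real (h x y) * cis (- k1 * x))) \<le> (2 + pi) * Cb / (\<bar>k1\<bar> * \<bar>y\<bar>)"
proof -
  have i1: "(\<lambda>t. of_real (hx t y) * cis (- k1 * t)) integrable_on {a..b}"
   and eq: "integral {a..b} (\<lambda>t. of_real (h t y) * cis (- k1 * t)) =
         (\<i> / of_real k1) * (of_real (h b y) * cis (- k1 * b) - of_real (h a y) * cis (- k1 * a))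
         - (\<i> / of_real k1) * integral {a..b} (\<lambda>t. of_real (hx t y) * cis (- k1 * t))"
    using ibp_cis[OF k1 ab, of "\<lambda>t. h t y" "\<lambda>t. hx t y"] der_x by auto
  have hy1: "\<bar>h t y\<bar> \<le> Cb / \<bar>y\<bar>" for t
  proof -
    have "\<bar>h t y\<bar> \<le> Cb / (1 + \<bar>y\<bar>)" by (rule Cb)
    also have "\<dots> \<le> Cb / \<bar>y\<bar>" using y Cb_nonneg by (intro divide_left_mono) auto
    finally show ?thesis .
  qed
  have n1: "norm (of_real (h b y) * cis (- k1 * b) - of_real (h a y) * cis (- k1 * a)) \<le> 2 * Cb / \<bar>y\<bar>"
  proof -
    have "norm (of_real (h b y) * cis (- k1 * b) - of_real (h a y) * cis (- k1 * a)) \<le> \<bar>h b y\<bar> + \<bar>h a y\<bar>"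
      by (metis norm_ofreal_cis norm_triangle_ineq4)
    then show ?thesis using hy1[of a] hy1[of b] by simp
  qed
  have ys: "\<bar>y\<bar> > 0" using y by simp
  have n2: "norm (integral {a..b} (\<lambda>t. of_real (hx t y) * cis (- k1 * t))) \<le> Cb * (pi / \<bar>y\<bar>)"
  proof -
    have "norm (integral {a..b} (\<lambda>t. of_real (hx t y) * cis (- k1 * t)))
        \<le> integral {a..b} (\<lambda>x. Cb * (1 / (\<bar>y\<bar>\<^sup>2 + x\<^sup>2)))"
    proof (rule HK_norm_bound[OF i1 lorentz_integrable[OF ys]])
      fix x
      have "\<bar>hx x y\<bar> \<le> Cb / (1 + x\<^sup>2 + y\<^sup>2)" by (rule Cb)
      also have "\<dots> \<le> Cb / (\<bar>y\<bar>\<^sup>2 + x\<^sup>2)"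
        using Cb_nonneg ys by (intro divide_left_mono) (auto simp: add_pos_nonneg)
      finally show "norm (of_real (hx x y) * cis (- k1 * x)) \<le> Cb * (1 / (\<bar>y\<bar>\<^sup>2 + x\<^sup>2))"
        by (simp add: norm_ofreal_cis)
    qed
    also have "\<dots> = Cb * integral {a..b} (\<lambda>x. 1 / (\<bar>y\<bar>\<^sup>2 + x\<^sup>2))" by (rule integral_mult_right)
    also have "\<dots> \<le> Cb * (pi / \<bar>y\<bar>)"
      using arctan_int_bound(2)[OF ys ab] Cb_nonneg by (intro mult_left_mono) auto
    finally show ?thesis .
  qed
  have nk: "norm (\<i> / of_real k1) = 1 / \<bar>k1\<bar>" by (simp add: norm_divide)
  have "norm (integral {a..b} (\<lambda>t. of_real (h t y) * cis (- k1 * t))) \<le>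
      norm ((\<i> / of_real k1) * (of_real (h b y) * cis (- k1 * b) - of_real (h a y) * cis (- k1 * a)))
      + norm ((\<i> / of_real k1) * integral {a..b} (\<lambda>t. of_real (hx t y) * cis (- k1 * t)))"
    unfolding eq by (rule norm_triangle_ineq4)
  also have "\<dots> \<le> (1 / \<bar>k1\<bar>) * (2 * Cb / \<bar>y\<bar>) + (1 / \<bar>k1\<bar>) * (Cb * (pi / \<bar>y\<bar>))"
    unfolding norm_mult nk using n1 n2 by (intro add_mono mult_left_mono) auto
  also have "\<dots> = (2 + pi) * Cb / (\<bar>k1\<bar> * \<bar>y\<bar>)"
    by (simp add: field_simps add_divide_distrib)
  finally show ?thesis .
qed

lemma param_cont:
  fixes F :: "real \<Rightarrow> real \<Rightarrow> complex"
  assumes "continuous_on UNIV (\<lambda>z. F (fst z) (snd z))"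
  shows "continuous_on S (\<lambda>x. integral {c..d} (F x))"
proof -
  have "continuous_on (S \<times> cbox c d) (\<lambda>(x, t). F x t)"
    using continuous_on_subset[OF assms subset_UNIV] by (simp add: split_def)
  then show ?thesis using integral_continuous_on_param[of S c d F] by (simp add: cbox_interval)
qed

lemma cont_hy_y: "continuous_on S (hy x)"
proof -
  have "continuous_on UNIV ((\<lambda>z. hy (fst z) (snd z)) \<circ> (\<lambda>y. (x, y)))"
    by (intro continuous_on_compose continuous_intros cont_hy[THEN continuous_on_subset]) auto
  then show ?thesis by (auto simp: o_def intro: continuous_on_subset)
qed

definition Jx where
  "Jx a b c d = integral {a..b} (\<lambda>x. integral {c..d} (\<lambda>y. of_real (h x y) * cis (- k1 * x) * cis (- k2 * y)))"

definition "M0 = (1 / \<bar>k2\<bar>) * (2 * ((2 + pi) * Cb / \<bar>k1\<bar>) + K0 * pi + Cb * (1 + R0\<^sup>2) * pi)"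

lemma tail:
  assumes ab: "a \<le> b" and uv: "u \<le> v" and A: "A > 0" and side: "A \<le> u \<or> v \<le> - A"
  shows "norm (Jx a b u v) \<le> M0 / A"
proof -
  have yA: "\<forall>y\<in>{u..v}. A \<le> \<bar>y\<bar>" using side uv by auto
  have uA: "A \<le> \<bar>u\<bar>" and vA: "A \<le> \<bar>v\<bar>" using yA uv by auto
  define Psi where "Psi x = integral {u..v} (\<lambda>y. of_real (hy x y) * cis (- k2 * y))" for x
  define P where "P = (\<i> / of_real k2) * cis (- k2 * v)"
  define Q where "Q = (\<i> / of_real k2) * cis (- k2 * u)"
  define c where "c = \<i> / of_real k2"
  have cPsi: "continuous_on UNIV Psi"
  proof -
    have "continuous_on UNIV (\<lambda>z. of_real (hy (fst z) (snd z)) * cis (- k2 * snd z))"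
      by (intro continuous_intros continuous_on_compose2[OF cont_hy]) auto
    then show ?thesis unfolding Psi_def by (rule param_cont)
  qed
  have cX: "continuous_on UNIV (\<lambda>x. of_real (h x y) * cis (- k1 * x))" for y
    by (intro continuous_intros cont_h_x)
  have iX: "(\<lambda>x. of_real (h x y) * cis (- k1 * x)) integrable_on {a..b}" for y
    by (rule integrable_continuous_interval[OF continuous_on_subset[OF cX subset_UNIV]])
  have iPsi: "(\<lambda>x. Psi x * cis (- k1 * x)) integrable_on {a..b}"
    by (intro integrable_continuous_interval continuous_intros continuous_on_subset[OF cPsi]) auto
  have inner: "integral {u..v} (\<lambda>y. of_real (h x y) * cis (- k1 * x) * cis (- k2 * y)) =
      P * (of_real (h x v) * cis (- k1 * x)) - Q * (of_real (h x u) * cis (- k1 * x)) - c * (Psi x * cis (- k1 * x))"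
    for x
  proof -
    have "integral {u..v} (\<lambda>y. of_real (h x y) * cis (- k1 * x) * cis (- k2 * y)) =
        integral {u..v} (\<lambda>y. cis (- k1 * x) * (of_real (h x y) * cis (- k2 * y)))"
      by (rule integral_cong) (simp add: ac_simps)
    also have "\<dots> = cis (- k1 * x) * integral {u..v} (\<lambda>y. of_real (h x y) * cis (- k2 * y))"
      by (rule integral_mult_right)
    also have "integral {u..v} (\<lambda>y. of_real (h x y) * cis (- k2 * y)) =
         (\<i> / of_real k2) * (of_real (h x v) * cis (- k2 * v) - of_real (h x u) * cis (- k2 * u))
         - (\<i> / of_real k2) * Psi x"
      unfolding Psi_def using ibp_cis(2)[OF k2 uv, of "\<lambda>t. h x t" "\<lambda>t. hy x t"] der_y by auto
    finally show ?thesis unfolding P_def Q_def c_def by (simp add: algebra_simps)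
  qed
  have "Jx a b u v = integral {a..b} (\<lambda>x. P * (of_real (h x v) * cis (- k1 * x)) - Q * (of_real (h x u) * cis (- k1 * x)) - c * (Psi x * cis (- k1 * x)))"
    unfolding Jx_def using inner by simp
  also have "\<dots> = P * integral {a..b} (\<lambda>x. of_real (h x v) * cis (- k1 * x))
      - Q * integral {a..b} (\<lambda>x. of_real (h x u) * cis (- k1 * x)) - c * integral {a..b} (\<lambda>x. Psi x * cis (- k1 * x))"
    using iX iPsi by (simp add: integral_diff integrable_on_mult_right integrable_diff)
  finally have Jeq: "Jx a b u v = P * integral {a..b} (\<lambda>x. of_real (h x v) * cis (- k1 * x))
      - Q * integral {a..b} (\<lambda>x. of_real (h x u) * cis (- k1 * x)) - c * integral {a..b} (\<lambda>x. Psi x * cis (- k1 * x))" .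
  have nP: "norm P = 1 / \<bar>k2\<bar>" "norm Q = 1 / \<bar>k2\<bar>" "norm c = 1 / \<bar>k2\<bar>"
    unfolding P_def Q_def c_def by (simp_all add: norm_mult norm_divide)
  have bX: "norm (integral {a..b} (\<lambda>x. of_real (h x y) * cis (- k1 * x))) \<le> (2 + pi) * Cb / \<bar>k1\<bar> / A"
    if "A \<le> \<bar>y\<bar>" for y
  proof -
    have "norm (integral {a..b} (\<lambda>x. of_real (h x y) * cis (- k1 * x))) \<le> (2 + pi) * Cb / (\<bar>k1\<bar> * \<bar>y\<bar>)"
      using that A by (intro xint_bound ab) auto
    also have "\<dots> \<le> (2 + pi) * Cb / (\<bar>k1\<bar> * A)"
      using that A k1 Cb_nonneg by (intro divide_left_mono mult_left_mono mult_pos_pos) auto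
    finally show ?thesis by simp
  qed
  define Bd where "Bd x = K0 * (1 / (A\<^sup>2 + x\<^sup>2)) + (Cb * (1 + R0\<^sup>2) / A) * (1 / (1\<^sup>2 + x\<^sup>2))" for x
  have pw: "norm (Psi x * cis (- k1 * x)) \<le> Bd x" for x
  proof -
    have n0: "norm (Psi x * cis (- k1 * x)) = norm (Psi x)" by (simp add: norm_mult)
    have B1: "0 \<le> K0 * (1 / (A\<^sup>2 + x\<^sup>2))" "0 \<le> (Cb * (1 + R0\<^sup>2) / A) * (1 / (1\<^sup>2 + x\<^sup>2))"
      using K0_nonneg Cb_nonneg A by (auto simp: add_pos_nonneg)
    show ?thesis
    proof (cases "R0 \<le> \<bar>x\<bar>")
      case True
      then have "norm (Psi x) \<le> K0 / (A\<^sup>2 + x\<^sup>2)" unfolding Psi_def using RK0 A uv yA by blast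
      then show ?thesis using B1 unfolding n0 Bd_def by simp
    next
      case False
      have iy: "(\<lambda>y. Cb * (1 / y\<^sup>2)) integrable_on {u..v}"
        using invsq_int_bound(1)[OF A uv side] by (rule integrable_on_mult_right)
      have "norm (Psi x) \<le> integral {u..v} (\<lambda>y. Cb * (1 / y\<^sup>2))"
        unfolding Psi_def
      proof (rule HK_norm_bound[OF _ iy])
        show "(\<lambda>y. of_real (hy x y) * cis (- k2 * y)) integrable_on {u..v}"
          by (intro integrable_continuous_interval continuous_intros cont_hy_y)
        fix y assume "y \<in> {u..v}"
        then have y0: "y\<^sup>2 > 0" using yA A by force
        have "\<bar>hy x y\<bar> \<le> Cb / (1 + x\<^sup>2 + y\<^sup>2)" by (rule Cb)
        also have "\<dots> \<le> Cb / y\<^sup>2" using Cb_nonneg y0 by (intro divide_left_mono) (auto simp: add_pos_nonneg)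
        finally show "norm (of_real (hy x y) * cis (- k2 * y)) \<le> Cb * (1 / y\<^sup>2)" by (simp add: norm_ofreal_cis)
      qed
      also have "\<dots> = Cb * integral {u..v} (\<lambda>y. 1 / y\<^sup>2)" by (rule integral_mult_right)
      also have "\<dots> \<le> Cb * (1 / A)" using invsq_int_bound(2)[OF A uv side] Cb_nonneg by (intro mult_left_mono) auto
      also have "\<dots> \<le> (Cb * (1 + R0\<^sup>2) / A) * (1 / (1\<^sup>2 + x\<^sup>2))"
      proof -
        have "x\<^sup>2 \<le> R0\<^sup>2" using False R0_nonneg by (metis abs_le_square_iff abs_of_nonneg less_eq_real_def not_le)
        then have "1 \<le> (1 + R0\<^sup>2) / (1 + x\<^sup>2)" by (simp add: add_pos_nonneg)
        then have "Cb / A * 1 \<le> Cb / A * ((1 + R0\<^sup>2) / (1 + x\<^sup>2))"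
          using Cb_nonneg A by (intro mult_left_mono) auto
        then show ?thesis by simp
      qed
      finally show ?thesis using B1 unfolding n0 Bd_def by simp
    qed
  qed
  have iBd: "Bd integrable_on {a..b}"
    unfolding Bd_def by (intro integrable_add lorentz_integrable A) auto
  have bPsi: "norm (integral {a..b} (\<lambda>x. Psi x * cis (- k1 * x))) \<le> K0 * pi / A + Cb * (1 + R0\<^sup>2) * pi / A"
  proof -
    have "norm (integral {a..b} (\<lambda>x. Psi x * cis (- k1 * x))) \<le> integral {a..b} Bd"
      by (rule HK_norm_bound[OF iPsi iBd pw])
    also have "\<dots> = K0 * integral {a..b} (\<lambda>x. 1 / (A\<^sup>2 + x\<^sup>2)) + (Cb * (1 + R0\<^sup>2) / A) * integral {a..b} (\<lambda>x. 1 / (1\<^sup>2 + x\<^sup>2))"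
      unfolding Bd_def
      by (subst integral_add[OF lorentz_integrable[OF A] lorentz_integrable[of 1]]) (simp_all only: integral_mult_right zero_less_one)
    also have "\<dots> \<le> K0 * (pi / A) + (Cb * (1 + R0\<^sup>2) / A) * (pi / 1)"
      using arctan_int_bound(2)[OF A ab] arctan_int_bound(2)[of 1 a b] ab K0_nonneg Cb_nonneg A
      by (intro add_mono mult_left_mono) auto
    finally show ?thesis by simp
  qed
  have "norm (Jx a b u v) \<le> norm (P * integral {a..b} (\<lambda>x. of_real (h x v) * cis (- k1 * x)))
      + norm (Q * integral {a..b} (\<lambda>x. of_real (h x u) * cis (- k1 * x)))
      + norm (c * integral {a..b} (\<lambda>x. Psi x * cis (- k1 * x)))"
    unfolding Jeq by (smt (verit) norm_triangle_ineq4)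
  also have "\<dots> \<le> (1 / \<bar>k2\<bar>) * ((2 + pi) * Cb / \<bar>k1\<bar> / A) + (1 / \<bar>k2\<bar>) * ((2 + pi) * Cb / \<bar>k1\<bar> / A)
      + (1 / \<bar>k2\<bar>) * (K0 * pi / A + Cb * (1 + R0\<^sup>2) * pi / A)"
    unfolding norm_mult nP using bX[OF vA] bX[OF uA] bPsi
    by (intro add_mono mult_left_mono) auto
  also have "\<dots> = M0 / A"
  proof -
    have gen: "(1 / a2) * ((2 + pi) * Cb / a1 / A) + (1 / a2) * ((2 + pi) * Cb / a1 / A)
      + (1 / a2) * (K0 * pi / A + Cb * (1 + R0\<^sup>2) * pi / A) =
       (1 / a2) * (2 * ((2 + pi) * Cb / a1) + K0 * pi + Cb * (1 + R0\<^sup>2) * pi) / A"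
      if "a1 > 0" "a2 > 0" for a1 a2 :: real
      using that A by (simp add: field_simps)
    show ?thesis unfolding M0_def using k1 k2 by (intro gen) auto
  qed
  finally show ?thesis .
qed

end


context Yloc begin

lemma cont_G_y: "continuous_on S (\<lambda>y. of_real (h x y) * cis (- k1 * x) * cis (- k2 * y))"
proof -
  have "continuous_on UNIV ((\<lambda>z. of_real (h (fst z) (snd z)) * cis (- k1 * fst z) * cis (- k2 * snd z)) \<circ> (\<lambda>y. (x, y)))"
    by (intro continuous_on_compose continuous_intros cont_F)
  then show ?thesis by (auto simp: o_def intro: continuous_on_subset)
qed

lemma cont_inner_x: "continuous_on S (\<lambda>x. integral {c..d} (\<lambda>y. of_real (h x y) * cis (- k1 * x) * cis (- k2 * y)))"
  by (rule param_cont) (rule cont_F)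

lemma Jx_split:
  assumes "c \<le> e" "e \<le> d"
  shows "Jx a b c d = Jx a b c e + Jx a b e d"
proof -
  have "Jx a b c d = integral {a..b} (\<lambda>x. integral {c..e} (\<lambda>y. of_real (h x y) * cis (- k1 * x) * cis (- k2 * y))
     + integral {e..d} (\<lambda>y. of_real (h x y) * cis (- k1 * x) * cis (- k2 * y)))"
    unfolding Jx_def
    by (intro integral_cong HK_combine[symmetric] assms integrable_continuous_interval cont_G_y)
  also have "\<dots> = Jx a b c e + Jx a b e d"
    unfolding Jx_def
    by (intro integral_add integrable_continuous_interval cont_inner_x)
  finally show ?thesis .
qed

lemma Jx_swap:
  "Jx a b c d = integral {c..d} (\<lambda>y. integral {a..b} (\<lambda>x. of_real (h x y) * cis (- k1 * x) * cis (- k2 * y)))"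
proof -
  have "continuous_on (cbox (a, c) (b, d)) (\<lambda>(x, y). of_real (h x y) * cis (- k1 * x) * cis (- k2 * y))"
    using cont_F[of "cbox (a, c) (b, d)"] by (simp add: split_def)
  from integral_swap_continuous[OF this] show ?thesis
    unfolding Jx_def by (simp add: cbox_interval)
qed

lemma tail0:
  assumes A: "A > 0" and ab: "a \<le> b" and d: "A \<le> d" "A \<le> d'"
  shows "norm (Jx a b 0 d - Jx a b 0 d') \<le> M0 / A"
proof (cases "d \<le> d'")
  case True
  have "Jx a b 0 d' = Jx a b 0 d + Jx a b d d'" using A d True by (intro Jx_split) auto
  then show ?thesis using tail[OF ab True A] d by (simp add: norm_minus_commute)
next
  case False
  have "Jx a b 0 d = Jx a b 0 d' + Jx a b d' d" using A d False by (intro Jx_split) auto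
  then show ?thesis using tail[OF ab _ A, of d' d] d False by simp
qed

lemma tail0':
  assumes A: "A > 0" and ab: "a \<le> b" and c: "c \<le> -A" "c' \<le> -A"
  shows "norm (Jx a b c 0 - Jx a b c' 0) \<le> M0 / A"
proof (cases "c \<le> c'")
  case True
  have "Jx a b c 0 = Jx a b c c' + Jx a b c' 0" using A c True by (intro Jx_split) auto
  then show ?thesis using tail[OF ab True A] c by simp
next
  case False
  have "Jx a b c' 0 = Jx a b c' c + Jx a b c 0" using A c False by (intro Jx_split) auto
  then show ?thesis using tail[OF ab _ A, of c' c] c False by (simp add: norm_minus_commute)
qed

lemma ycauchy:
  assumes A: "A > 0" and ab: "a \<le> b" and c: "c \<le> -A" "c' \<le> -A" and d: "A \<le> d" "A \<le> d'"
  shows "norm (Jx a b c d - Jx a b c' d') \<le> 2 * M0 / A"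
proof -
  have "Jx a b c d = Jx a b c 0 + Jx a b 0 d" "Jx a b c' d' = Jx a b c' 0 + Jx a b 0 d'"
    using A c d by (auto intro!: Jx_split)
  then have "Jx a b c d - Jx a b c' d' = (Jx a b c 0 - Jx a b c' 0) + (Jx a b 0 d - Jx a b 0 d')"
    by simp
  then have "norm (Jx a b c d - Jx a b c' d') \<le> norm (Jx a b c 0 - Jx a b c' 0) + norm (Jx a b 0 d - Jx a b 0 d')"
    by (simp only:) (rule norm_triangle_ineq)
  also have "\<dots> \<le> M0 / A + M0 / A" by (intro add_mono tail0 tail0' assms)
  finally show ?thesis by simp
qed

lemma xtail:
  assumes A: "A > 0" and uv: "u \<le> v" and side: "A \<le> u \<or> v \<le> - A"
  shows "norm (integral {u..v} (\<lambda>x. of_real (h x y) * cis (- k1 * x))) \<le> 3 * Cb / (\<bar>k1\<bar> * A)"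
proof -
  have i1: "(\<lambda>t. of_real (hx t y) * cis (- k1 * t)) integrable_on {u..v}"
   and eq: "integral {u..v} (\<lambda>t. of_real (h t y) * cis (- k1 * t)) =
         (\<i> / of_real k1) * (of_real (h v y) * cis (- k1 * v) - of_real (h u y) * cis (- k1 * u))
         - (\<i> / of_real k1) * integral {u..v} (\<lambda>t. of_real (hx t y) * cis (- k1 * t))"
    using ibp_cis[OF k1 uv, of "\<lambda>t. h t y" "\<lambda>t. hx t y"] der_x by auto
  have hb: "\<bar>h t y\<bar> \<le> Cb / A" if "A \<le> \<bar>t\<bar>" for t
  proof -
    have "\<bar>h t y\<bar> \<le> Cb / (1 + \<bar>t\<bar>)" by (rule Cb)
    also have "\<dots> \<le> Cb / A" using that A Cb_nonneg by (intro divide_left_mono) auto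
    finally show ?thesis .
  qed
  have uA: "A \<le> \<bar>u\<bar>" "A \<le> \<bar>v\<bar>" using side uv by auto
  have n1: "norm (of_real (h v y) * cis (- k1 * v) - of_real (h u y) * cis (- k1 * u)) \<le> 2 * Cb / A"
  proof -
    have "norm (of_real (h v y) * cis (- k1 * v) - of_real (h u y) * cis (- k1 * u)) \<le> \<bar>h v y\<bar> + \<bar>h u y\<bar>"
      by (metis norm_ofreal_cis norm_triangle_ineq4)
    then show ?thesis using hb[OF uA(1)] hb[OF uA(2)] by simp
  qed
  have iy: "(\<lambda>x. Cb * (1 / x\<^sup>2)) integrable_on {u..v}"
    using invsq_int_bound(1)[OF A uv side] by (rule integrable_on_mult_right)
  have n2: "norm (integral {u..v} (\<lambda>t. of_real (hx t y) * cis (- k1 * t))) \<le> Cb * (1 / A)"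
  proof -
    have "norm (integral {u..v} (\<lambda>t. of_real (hx t y) * cis (- k1 * t))) \<le> integral {u..v} (\<lambda>x. Cb * (1 / x\<^sup>2))"
    proof (rule HK_norm_bound[OF i1 iy])
      fix x assume "x \<in> {u..v}"
      then have x0: "x\<^sup>2 > 0" using side uv A by force
      have "\<bar>hx x y\<bar> \<le> Cb / (1 + x\<^sup>2 + y\<^sup>2)" by (rule Cb)
      also have "\<dots> \<le> Cb / x\<^sup>2" using Cb_nonneg x0 by (intro divide_left_mono) (auto simp: add_pos_nonneg)
      finally show "norm (of_real (hx x y) * cis (- k1 * x)) \<le> Cb * (1 / x\<^sup>2)" by (simp add: norm_ofreal_cis)
    qed
    also have "\<dots> = Cb * integral {u..v} (\<lambda>x. 1 / x\<^sup>2)" by (rule integral_mult_right)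
    also have "\<dots> \<le> Cb * (1 / A)" using invsq_int_bound(2)[OF A uv side] Cb_nonneg by (intro mult_left_mono) auto
    finally show ?thesis .
  qed
  have nk: "norm (\<i> / of_real k1) = 1 / \<bar>k1\<bar>" by (simp add: norm_divide)
  have "norm (integral {u..v} (\<lambda>t. of_real (h t y) * cis (- k1 * t))) \<le>
      norm ((\<i> / of_real k1) * (of_real (h v y) * cis (- k1 * v) - of_real (h u y) * cis (- k1 * u)))
      + norm ((\<i> / of_real k1) * integral {u..v} (\<lambda>t. of_real (hx t y) * cis (- k1 * t)))"
    unfolding eq by (rule norm_triangle_ineq4)
  also have "\<dots> \<le> (1 / \<bar>k1\<bar>) * (2 * Cb / A) + (1 / \<bar>k1\<bar>) * (Cb * (1 / A))"
    unfolding norm_mult nk using n1 n2 by (intro add_mono mult_left_mono) auto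
  also have "\<dots> = 3 * Cb / (\<bar>k1\<bar> * A)" by (simp add: field_simps)
  finally show ?thesis .
qed

lemma xcauchy:
  assumes r: "0 < r" "r \<le> r'"
  shows "norm (integral {-r'..r'} (\<lambda>x. of_real (h x y) * cis (- k1 * x))
            - integral {-r..r} (\<lambda>x. of_real (h x y) * cis (- k1 * x))) \<le> 6 * Cb / \<bar>k1\<bar> / r"
proof -
  let ?I = "\<lambda>p q. integral {p..q} (\<lambda>x. of_real (h x y) * cis (- k1 * x))"
  have ig: "(\<lambda>x. of_real (h x y) * cis (- k1 * x)) integrable_on {p..q}" for p q
    by (intro integrable_continuous_interval continuous_intros cont_h_x)
  have e1: "?I (-r') r' = ?I (-r') (-r) + ?I (-r) r'"
    by (rule HK_combine[symmetric, OF _ _ ig]) (use r in linarith)+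
  have e2: "?I (-r) r' = ?I (-r) r + ?I r r'"
    by (rule HK_combine[symmetric, OF _ _ ig]) (use r in linarith)+
  have "?I (-r') r' - ?I (-r) r = ?I (-r') (-r) + ?I r r'" using e1 e2 by simp
  then have "norm (?I (-r') r' - ?I (-r) r) \<le> norm (?I (-r') (-r)) + norm (?I r r')"
    by (simp only:) (rule norm_triangle_ineq)
  also have "\<dots> \<le> 3 * Cb / (\<bar>k1\<bar> * r) + 3 * Cb / (\<bar>k1\<bar> * r)"
    using r by (intro add_mono xtail) auto
  also have "\<dots> = 6 * Cb / \<bar>k1\<bar> / r" by (simp add: field_simps)
  finally show ?thesis .
qed

end


lemma cauchy_rate:
  fixes g :: "real \<Rightarrow> 'a::banach"
  assumes H: "\<And>r r'. 0 < r \<Longrightarrow> r \<le> r' \<Longrightarrow> norm (g r' - g r) \<le> M / r"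
  shows "\<exists>L. \<forall>r>0. norm (g r - L) \<le> M / r"
proof -
  have M: "M \<ge> 0" using H[of 1 1] by simp
  define s where "s n = g (real (Suc n))" for n
  have "Cauchy s"
  proof (rule CauchyI)
    fix e :: real assume e: "e > 0"
    obtain N :: nat where N: "2 * M / e < real N" using reals_Archimedean2 by blast
    have "norm (s m - s n) < e" if "m \<ge> N" "n \<ge> N" for m n
    proof -
      have pN: "0 < real (Suc N)" by simp
      have a: "norm (s m - s N) \<le> M / real (Suc N)" unfolding s_def using that by (intro H) auto
      have b: "norm (s n - s N) \<le> M / real (Suc N)" unfolding s_def using that by (intro H) auto
      have "norm (s m - s n) \<le> norm (s m - s N) + norm (s n - s N)"
        using norm_triangle_ineq4[of "s m - s N" "s n - s N"] by simp
      also have "\<dots> \<le> 2 * M / real (Suc N)" using a b by simp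
      also have "\<dots> < e"
      proof -
        have "2 * M < e * real (Suc N)" using N e by (simp add: field_simps)
        then show ?thesis using pN by (simp add: field_simps)
      qed
      finally show ?thesis .
    qed
    then show "\<exists>N. \<forall>m\<ge>N. \<forall>n\<ge>N. norm (s m - s n) < e" by blast
  qed
  then obtain L where L: "s \<longlonglongrightarrow> L" using Cauchy_convergent_iff convergent_def by blast
  have "norm (g r - L) \<le> M / r" if r: "r > 0" for r
  proof -
    have "((\<lambda>n. norm (g r - s n)) \<longlongrightarrow> norm (g r - L)) sequentially"
      by (intro tendsto_intros L)
    moreover have "eventually (\<lambda>n. norm (g r - s n) \<le> M / r) sequentially"
    proof -
      obtain N :: nat where "r < real N" using reals_Archimedean2 by blast
      have "\<forall>n\<ge>N. norm (g r - s n) \<le> M / r"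
      proof (intro allI impI)
        fix n assume "N \<le> n"
        then have "r \<le> real (Suc n)" using \<open>r < real N\<close> by simp
        then have "norm (g (real (Suc n)) - g r) \<le> M / r" using H r by blast
        then show "norm (g r - s n) \<le> M / r" unfolding s_def by (simp add: norm_minus_commute)
      qed
      then show ?thesis unfolding eventually_sequentially by blast
    qed
    ultimately show ?thesis by (rule tendsto_upperbound) simp
  qed
  then show ?thesis by blast
qed

lemma rate_eventually:
  assumes e: "e > 0"
  shows "eventually (\<lambda>r::real. M / r < e \<and> r > 0) at_top"
proof -
  have "\<forall>r\<ge>(\<bar>M\<bar> + 1) / e. M / r < e \<and> r > 0"
  proof (intro allI impI)
    fix r :: real assume r: "(\<bar>M\<bar> + 1) / e \<le> r"
    have rp: "r > 0" using r e by (smt (verit) divide_pos_pos)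
    have "\<bar>M\<bar> + 1 \<le> r * e" using r e by (simp add: field_simps)
    then have "M < e * r" by (smt (verit) mult.commute)
    then show "M / r < e \<and> r > 0" using rp by (simp add: field_simps)
  qed
  then show ?thesis unfolding eventually_at_top_linorder by blast
qed

lemma rate_tendsto:
  fixes g :: "real \<Rightarrow> 'a::real_normed_vector"
  assumes "\<And>r. r > 0 \<Longrightarrow> norm (g r - L) \<le> M / r"
  shows "(g \<longlongrightarrow> L) at_top"
  unfolding tendsto_iff
proof (intro allI impI)
  fix e :: real assume e: "e > 0"
  show "eventually (\<lambda>r. dist (g r) L < e) at_top"
    using rate_eventually[OF e, of M]
    by eventually_elim (use assms in \<open>auto simp: dist_norm intro: le_less_trans\<close>)
qed

lemma rate_uniform:
  fixes f :: "real \<Rightarrow> 'b \<Rightarrow> 'a::real_normed_vector"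
  assumes "\<And>r y. r > 0 \<Longrightarrow> y \<in> S \<Longrightarrow> norm (f r y - g y) \<le> M / r"
  shows "uniform_limit S f g at_top"
  unfolding uniform_limit_iff
proof (intro allI impI)
  fix e :: real assume e: "e > 0"
  show "\<forall>\<^sub>F n in at_top. \<forall>x\<in>S. dist (f n x) (g x) < e"
    using rate_eventually[OF e, of M]
    by eventually_elim (use assms in \<open>auto simp: dist_norm intro: le_less_trans\<close>)
qed


context Yloc begin

definition "Ir r y = integral {-r..r} (\<lambda>x. of_real (h x y) * cis (- k1 * x))"

definition "Fx y = (SOME L. \<forall>r>0. norm (Ir r y - L) \<le> (6 * Cb / \<bar>k1\<bar>) / r)"

lemma Fx_bound: "r > 0 \<Longrightarrow> norm (Ir r y - Fx y) \<le> (6 * Cb / \<bar>k1\<bar>) / r"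
proof -
  have "\<exists>L. \<forall>r>0. norm (Ir r y - L) \<le> (6 * Cb / \<bar>k1\<bar>) / r"
    by (rule cauchy_rate) (unfold Ir_def, rule xcauchy)
  from someI_ex[OF this] show "r > 0 \<Longrightarrow> norm (Ir r y - Fx y) \<le> (6 * Cb / \<bar>k1\<bar>) / r"
    unfolding Fx_def by blast
qed

lemma Fx_tendsto: "((\<lambda>r. Ir r y) \<longlongrightarrow> Fx y) at_top"
  by (rule rate_tendsto) (rule Fx_bound)

lemma cont_h_swap: "continuous_on S (\<lambda>z. h (snd z) (fst z))"
proof -
  have "continuous_on UNIV ((\<lambda>z. h (fst z) (snd z)) \<circ> (\<lambda>z. (snd z, fst z)))"
    by (intro continuous_on_compose continuous_intros continuous_on_subset[OF cont_h]) auto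
  then show ?thesis by (auto simp: o_def intro: continuous_on_subset)
qed

lemma cont_Ir: "continuous_on S (Ir r)"
proof -
  have "continuous_on UNIV (\<lambda>z. of_real (h (snd z) (fst z)) * cis (- k1 * snd z))"
    by (intro continuous_intros cont_h_swap)
  then show ?thesis unfolding Ir_def by (rule param_cont)
qed

lemma improper:
  assumes Lb: "\<And>A a b c d. A > 0 \<Longrightarrow> a \<le> -A \<Longrightarrow> A \<le> b \<Longrightarrow> c \<le> -A \<Longrightarrow> A \<le> d \<Longrightarrow> norm (Jx a b c d - L) \<le> M / A"
  shows "has_improper_integral_R (\<lambda>y. Fx y * cis (- k2 * y)) L"
proof -
  have main: "(\<lambda>y. Fx y * cis (- k2 * y)) integrable_on {c..d} \<and>
     (\<forall>A>0. c \<le> -A \<longrightarrow> A \<le> d \<longrightarrow> norm (integral {c..d} (\<lambda>y. Fx y * cis (- k2 * y)) - L) \<le> M / A)"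
    if cd: "c \<le> d" for c d
  proof -
    have ul: "uniform_limit {c..d} (\<lambda>r y. Ir r y * cis (- k2 * y)) (\<lambda>y. Fx y * cis (- k2 * y)) at_top"
    proof (rule rate_uniform)
      fix r y assume "(r::real) > 0"
      then have "norm (Ir r y - Fx y) \<le> (6 * Cb / \<bar>k1\<bar>) / r" by (rule Fx_bound)
      then show "norm (Ir r y * cis (- k2 * y) - Fx y * cis (- k2 * y)) \<le> (6 * Cb / \<bar>k1\<bar>) / r"
        by (simp add: left_diff_distrib[symmetric] norm_mult)
    qed
    obtain I J where I: "\<And>r. ((\<lambda>y. Ir r y * cis (- k2 * y)) has_integral I r) {c..d}"
      and J: "((\<lambda>y. Fx y * cis (- k2 * y)) has_integral J) {c..d}"
      and IJ: "(I \<longlongrightarrow> J) at_top"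
      by (rule uniform_limit_integral[OF ul]) (auto intro!: continuous_intros cont_Ir)
    have Ieq: "I r = Jx (-r) r c d" for r
    proof -
      have "I r = integral {c..d} (\<lambda>y. Ir r y * cis (- k2 * y))" using integral_unique[OF I[of r]] by simp
      also have "\<dots> = integral {c..d} (\<lambda>y. integral {-r..r} (\<lambda>x. of_real (h x y) * cis (- k1 * x) * cis (- k2 * y)))"
        unfolding Ir_def by (simp only: integral_mult_left)
      also have "\<dots> = Jx (-r) r c d" by (rule Jx_swap[symmetric])
      finally show ?thesis .
    qed
    have "norm (J - L) \<le> M / A" if A: "A > 0" "c \<le> -A" "A \<le> d" for A
    proof -
      have "((\<lambda>r. norm (I r - L)) \<longlongrightarrow> norm (J - L)) at_top" by (intro tendsto_intros IJ)
      moreover have "eventually (\<lambda>r. norm (I r - L) \<le> M / A) at_top"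
        unfolding eventually_at_top_linorder
        by (rule exI[of _ A]) (use A Lb in \<open>auto simp: Ieq\<close>)
      ultimately show ?thesis by (rule tendsto_upperbound) simp
    qed
    then show ?thesis using J by (auto simp: integral_unique)
  qed
  show ?thesis
    unfolding has_improper_integral_R_def
  proof (intro conjI allI)
    fix a b :: real
    show "(\<lambda>y. Fx y * cis (- k2 * y)) integrable_on {a..b}"
      using main[of a b] by (cases "a \<le> b") auto
  next
    show "((\<lambda>p. integral {fst p..snd p} (\<lambda>y. Fx y * cis (- k2 * y))) \<longlongrightarrow> L) (at_bot \<times>\<^sub>F at_top)"
      unfolding tendsto_iff
    proof (intro allI impI)
      fix e :: real assume e: "e > 0"
      define A where "A = (\<bar>M\<bar> + 1) / e"
      have A: "A > 0" unfolding A_def using e by (smt (verit) divide_pos_pos)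
      have MA: "M / A < e"
      proof -
        have "e * A = \<bar>M\<bar> + 1" unfolding A_def using e by simp
        then have "M < e * A" by linarith
        then show ?thesis using A by (simp add: field_simps)
      qed
      show "eventually (\<lambda>p. dist (integral {fst p..snd p} (\<lambda>y. Fx y * cis (- k2 * y))) L < e) (at_bot \<times>\<^sub>F at_top)"
        unfolding eventually_prod_filter
      proof (intro exI conjI)
        show "eventually (\<lambda>c. c \<le> -A) at_bot" by (rule eventually_le_at_bot)
        show "eventually (\<lambda>d. A \<le> d) at_top" by (rule eventually_ge_at_top)
        show "\<forall>c d. c \<le> -A \<longrightarrow> A \<le> d \<longrightarrow> dist (integral {fst (c, d)..snd (c, d)} (\<lambda>y. Fx y * cis (- k2 * y))) L < e"
        proof (intro allI impI)
          fix c d assume cd: "c \<le> -A" "A \<le> d"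
          then have "c \<le> d" using A by linarith
          then have "norm (integral {c..d} (\<lambda>y. Fx y * cis (- k2 * y)) - L) \<le> M / A"
            using main cd A by blast
          then show "dist (integral {fst (c, d)..snd (c, d)} (\<lambda>y. Fx y * cis (- k2 * y))) L < e"
            using MA by (simp add: dist_norm)
        qed
      qed
    qed
  qed
qed

end


locale Good = Y: Yloc h hx hy k1 k2 + X: Yloc "\<lambda>y x. h x y" "\<lambda>y x. hy x y" "\<lambda>y x. hx x y" k2 k1
  for h hx hy :: "real \<Rightarrow> real \<Rightarrow> real" and k1 k2 :: real
begin

lemma JJ: "X.Jx c d a b = Y.Jx a b c d"
  unfolding Y.Jx_swap[of a b c d] X.Jx_def
  by (intro integral_cong) (simp add: ac_simps)

definition "MM = 2 * Y.M0 + 2 * X.M0"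

lemma cauchy4:
  assumes A: "A > 0" and "a \<le> -A" "a' \<le> -A" "A \<le> b" "A \<le> b'" "c \<le> -A" "c' \<le> -A" "A \<le> d" "A \<le> d'"
  shows "norm (Y.Jx a b c d - Y.Jx a' b' c' d') \<le> MM / A"
proof -
  have "norm (Y.Jx a b c d - Y.Jx a' b' c' d') \<le> norm (Y.Jx a b c d - Y.Jx a b c' d') + norm (Y.Jx a b c' d' - Y.Jx a' b' c' d')"
    by (rule norm_diff_triangle_le) (rule order_refl)+
  also have "\<dots> \<le> 2 * Y.M0 / A + 2 * X.M0 / A"
  proof (rule add_mono)
    show "norm (Y.Jx a b c d - Y.Jx a b c' d') \<le> 2 * Y.M0 / A"
      using assms by (intro Y.ycauchy) auto
    have "norm (X.Jx c' d' a b - X.Jx c' d' a' b') \<le> 2 * X.M0 / A"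
      using assms by (intro X.ycauchy) auto
    then show "norm (Y.Jx a b c' d' - Y.Jx a' b' c' d') \<le> 2 * X.M0 / A" by (simp add: JJ)
  qed
  also have "\<dots> = MM / A" unfolding MM_def by (simp add: add_divide_distrib)
  finally show ?thesis .
qed

definition "Lim4 = (SOME L. \<forall>r>0. norm (Y.Jx (-r) r (-r) r - L) \<le> MM / r)"

lemma Lim4_bound: "r > 0 \<Longrightarrow> norm (Y.Jx (-r) r (-r) r - Lim4) \<le> MM / r"
proof -
  have "\<exists>L. \<forall>r>0. norm (Y.Jx (-r) r (-r) r - L) \<le> MM / r"
    by (rule cauchy_rate) (rule cauchy4, auto)
  from someI_ex[OF this] show "r > 0 \<Longrightarrow> norm (Y.Jx (-r) r (-r) r - Lim4) \<le> MM / r"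
    unfolding Lim4_def by blast
qed

lemma Lbound:
  assumes A: "A > 0" and "a \<le> -A" "A \<le> b" "c \<le> -A" "A \<le> d"
  shows "norm (Y.Jx a b c d - Lim4) \<le> (2 * MM) / A"
proof -
  have "norm (Y.Jx a b c d - Lim4) \<le> norm (Y.Jx a b c d - Y.Jx (-A) A (-A) A) + norm (Y.Jx (-A) A (-A) A - Lim4)"
    by (rule norm_diff_triangle_le) (rule order_refl)+
  also have "\<dots> \<le> MM / A + MM / A"
    using assms by (intro add_mono cauchy4 Lim4_bound) auto
  finally show ?thesis by simp
qed

lemma LboundX:
  assumes A: "A > 0" and "a \<le> -A" "A \<le> b" "c \<le> -A" "A \<le> d"
  shows "norm (X.Jx a b c d - Lim4) \<le> (2 * MM) / A"
  unfolding JJ using assms by (intro Lbound) auto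

lemma double_limit:
  "((\<lambda>p. integral {- fst p..fst p} (\<lambda>y. integral {- snd p..snd p}
        (\<lambda>x. of_real (h x y) * cis (- k1 * x) * cis (- k2 * y)))) \<longlongrightarrow> Lim4) (at_top \<times>\<^sub>F at_top)"
  unfolding tendsto_iff
proof (intro allI impI)
  fix e :: real assume e: "e > 0"
  define A where "A = (\<bar>2 * MM\<bar> + 1) / e"
  have A: "A > 0" unfolding A_def using e by (smt (verit) divide_pos_pos)
  have MA: "2 * MM / A < e"
  proof -
    have "e * A = \<bar>2 * MM\<bar> + 1" unfolding A_def using e by simp
    then have "2 * MM < e * A" by linarith
    then show ?thesis using A by (simp add: field_simps)
  qed
  show "eventually (\<lambda>p. dist (integral {- fst p..fst p} (\<lambda>y. integral {- snd p..snd p}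
        (\<lambda>x. of_real (h x y) * cis (- k1 * x) * cis (- k2 * y)))) Lim4 < e) (at_top \<times>\<^sub>F at_top)"
    unfolding eventually_prod_filter
  proof (intro exI conjI)
    show "eventually (\<lambda>m. A \<le> m) at_top" by (rule eventually_ge_at_top)
    show "eventually (\<lambda>n. A \<le> n) at_top" by (rule eventually_ge_at_top)
    show "\<forall>m n. A \<le> m \<longrightarrow> A \<le> n \<longrightarrow> dist (integral {- fst (m, n)..fst (m, n)} (\<lambda>y. integral {- snd (m, n)..snd (m, n)}
        (\<lambda>x. of_real (h x y) * cis (- k1 * x) * cis (- k2 * y)))) Lim4 < e"
    proof (intro allI impI)
      fix m n assume mn: "A \<le> m" "A \<le> n"
      have "norm (Y.Jx (-n) n (-m) m - Lim4) \<le> 2 * MM / A"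
        using mn A by (intro Lbound) auto
      then show "dist (integral {- fst (m, n)..fst (m, n)} (\<lambda>y. integral {- snd (m, n)..snd (m, n)}
        (\<lambda>x. of_real (h x y) * cis (- k1 * x) * cis (- k2 * y)))) Lim4 < e"
        using MA by (simp add: dist_norm Y.Jx_swap)
    qed
  qed
qed

lemma conclusion:
  "(\<forall>y. ((\<lambda>r. integral {-r..r} (\<lambda>x. of_real (h x y) * cis (- k1 * x))) \<longlongrightarrow> Y.Fx y) at_top)
   \<and> (\<forall>x. ((\<lambda>r. integral {-r..r} (\<lambda>y. of_real (h x y) * cis (- k2 * y))) \<longlongrightarrow> X.Fx x) at_top)
   \<and> has_improper_integral_R (\<lambda>y. Y.Fx y * cis (- k2 * y)) Lim4
   \<and> has_improper_integral_R (\<lambda>x. X.Fx x * cis (- k1 * x)) Lim4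
   \<and> ((\<lambda>p. integral {- fst p..fst p} (\<lambda>y. integral {- snd p..snd p}
        (\<lambda>x. of_real (h x y) * cis (- k1 * x) * cis (- k2 * y)))) \<longlongrightarrow> Lim4) (at_top \<times>\<^sub>F at_top)"
proof (intro conjI allI double_limit)
  fix y show "((\<lambda>r. integral {-r..r} (\<lambda>x. of_real (h x y) * cis (- k1 * x))) \<longlongrightarrow> Y.Fx y) at_top"
    using Y.Fx_tendsto[of y] unfolding Y.Ir_def .
next
  fix x show "((\<lambda>r. integral {-r..r} (\<lambda>y. of_real (h x y) * cis (- k2 * y))) \<longlongrightarrow> X.Fx x) at_top"
    using X.Fx_tendsto[of x] unfolding X.Ir_def .
next
  show "has_improper_integral_R (\<lambda>y. Y.Fx y * cis (- k2 * y)) Lim4"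
    by (rule Y.improper) (rule Lbound)
next
  show "has_improper_integral_R (\<lambda>x. X.Fx x * cis (- k1 * x)) Lim4"
    by (rule X.improper) (rule LboundX)
qed

end


lemma smooth2_D:
  assumes "smooth2 g"
  shows "g differentiable (at z)" "smooth2 (partial_x g)" "smooth2 (partial_y g)"
  using assms by (auto elim: smooth2.cases)

lemma smooth2_cont: "smooth2 g \<Longrightarrow> continuous_on S g"
  by (meson continuous_at_imp_continuous_on differentiable_imp_continuous_within smooth2_D(1))

lemma der_x_of:
  assumes "g differentiable (at (x, y))"
  shows "((\<lambda>t. g (t, y)) has_real_derivative partial_x g (x, y)) (at x)"
proof -
  have "(\<lambda>t::real. (t, y)) differentiable (at x)"
    by (intro derivative_intros)
  then have "(g \<circ> (\<lambda>t. (t, y))) differentiable (at x)"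
    using assms by (intro differentiable_chain_at) auto
  then have "(\<lambda>t. g (t, y)) differentiable (at x)" by (simp add: o_def)
  then have "DERIV (\<lambda>t. g (t, y)) x :> deriv (\<lambda>t. g (t, y)) x"
    by (simp add: DERIV_deriv_iff_real_differentiable)
  then show ?thesis by (simp add: partial_x_def)
qed

lemma der_y_of:
  assumes "g differentiable (at (x, y))"
  shows "((\<lambda>t. g (x, t)) has_real_derivative partial_y g (x, y)) (at y)"
proof -
  have "(\<lambda>t::real. (x, t)) differentiable (at y)"
    by (intro derivative_intros)
  then have "(g \<circ> (\<lambda>t. (x, t))) differentiable (at y)"
    using assms by (intro differentiable_chain_at) auto
  then have "(\<lambda>t. g (x, t)) differentiable (at y)" by (simp add: o_def)
  then have "DERIV (\<lambda>t. g (x, t)) y :> deriv (\<lambda>t. g (x, t)) y"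
    by (simp add: DERIV_deriv_iff_real_differentiable)
  then show ?thesis by (simp add: partial_y_def)
qed

lemma cont_bounded_ball:
  fixes g :: "real \<times> real \<Rightarrow> real"
  assumes "continuous_on UNIV g"
  shows "\<exists>B\<ge>0. \<forall>z. norm z \<le> r \<longrightarrow> \<bar>g z\<bar> \<le> B"
proof -
  have "compact (g ` cball 0 r)"
    by (intro compact_continuous_image continuous_on_subset[OF assms]) auto
  then obtain B where B: "B > 0" "\<forall>w\<in>g ` cball 0 r. norm w \<le> B"
    using compact_imp_bounded bounded_pos by metis
  then show ?thesis by (intro exI[of _ B]) auto
qed

lemma aux_div:
  fixes t C :: real
  assumes "t > 1" "C \<ge> 0"
  shows "C / t \<le> 2 * C / (1 + t)"
proof -
  have "C * 1 \<le> C * t" using assms by (intro mult_left_mono) auto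
  then have "C * (1 + t) \<le> (2 * C) * t" by (simp add: algebra_simps)
  then show ?thesis using assms by (simp add: divide_simps)
qed

lemma aux_div2:
  fixes t B :: real
  assumes "0 \<le> t" "t \<le> 1" "B \<ge> 0"
  shows "B \<le> 2 * B / (1 + t)"
proof -
  have "B * t \<le> B * 1" using assms by (intro mult_left_mono) auto
  then have "B * (1 + t) \<le> 2 * B" by (simp add: algebra_simps)
  then show ?thesis using assms by (simp add: divide_simps)
qed

lemma decay1:
  fixes g :: "real \<times> real \<Rightarrow> real"
  assumes c: "continuous_on UNIV g" and d: "very_moderate_decrease g"
  shows "\<exists>C\<ge>0. \<forall>z. \<bar>g z\<bar> \<le> C / (1 + norm z)"
proof -
  obtain C where C: "C > 0" "\<forall>z. norm z > 1 \<longrightarrow> \<bar>g z\<bar> \<le> C / norm z"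
    using d unfolding very_moderate_decrease_def by blast
  obtain B where B: "B \<ge> 0" "\<forall>z. norm z \<le> 1 \<longrightarrow> \<bar>g z\<bar> \<le> B"
    using cont_bounded_ball[OF c, of 1] by blast
  have "\<bar>g z\<bar> \<le> (2 * C + 2 * B) / (1 + norm z)" for z
  proof (cases "norm z > 1")
    case True
    have "\<bar>g z\<bar> \<le> C / norm z" using C True by blast
    also have "\<dots> \<le> (2 * C) / (1 + norm z)" using True C by (intro aux_div) auto
    also have "\<dots> \<le> (2 * C + 2 * B) / (1 + norm z)" using B by (intro divide_right_mono) auto
    finally show ?thesis .
  next
    case False
    have "\<bar>g z\<bar> \<le> B" using B(2) False by (meson not_less)
    also have "\<dots> \<le> (2 * B) / (1 + norm z)" using False B by (intro aux_div2) auto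
    also have "\<dots> \<le> (2 * C + 2 * B) / (1 + norm z)" using C by (intro divide_right_mono) auto
    finally show ?thesis .
  qed
  then show ?thesis using B C by (intro exI[of _ "2 * C + 2 * B"]) auto
qed

lemma decay2:
  fixes g :: "real \<times> real \<Rightarrow> real"
  assumes c: "continuous_on UNIV g" and d: "moderate_decrease g"
  shows "\<exists>C\<ge>0. \<forall>z. \<bar>g z\<bar> \<le> C / (1 + (norm z)\<^sup>2)"
proof -
  obtain C where C: "C > 0" "\<forall>z. norm z > 1 \<longrightarrow> \<bar>g z\<bar> \<le> C / (norm z)\<^sup>2"
    using d unfolding moderate_decrease_def by blast
  obtain B where B: "B \<ge> 0" "\<forall>z. norm z \<le> 1 \<longrightarrow> \<bar>g z\<bar> \<le> B"
    using cont_bounded_ball[OF c, of 1] by blast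
  have "\<bar>g z\<bar> \<le> (2 * C + 2 * B) / (1 + (norm z)\<^sup>2)" for z
  proof (cases "norm z > 1")
    case True
    then have n2: "(norm z)\<^sup>2 > 1" by (metis less_1_mult power2_eq_square)
    have "\<bar>g z\<bar> \<le> C / (norm z)\<^sup>2" using C True by blast
    also have "\<dots> \<le> (2 * C) / (1 + (norm z)\<^sup>2)" using n2 C by (intro aux_div) auto
    also have "\<dots> \<le> (2 * C + 2 * B) / (1 + (norm z)\<^sup>2)" using B by (intro divide_right_mono) auto
    finally show ?thesis .
  next
    case False
    then have n2: "(norm z)\<^sup>2 \<le> 1" by (simp add: power_le_one)
    have "\<bar>g z\<bar> \<le> B" using B(2) False by (meson not_less)
    also have "\<dots> \<le> (2 * B) / (1 + (norm z)\<^sup>2)" using n2 B by (intro aux_div2) auto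
    also have "\<dots> \<le> (2 * C + 2 * B) / (1 + (norm z)\<^sup>2)" using C by (intro divide_right_mono) auto
    finally show ?thesis .
  qed
  then show ?thesis using B C by (intro exI[of _ "2 * C + 2 * B"]) auto
qed

lemma normsq_pair: "(norm (x::real, y::real))\<^sup>2 = x\<^sup>2 + y\<^sup>2"
  by (simp add: norm_Pair)

lemma basic_bounds:
  assumes s: "smooth2 g" and b: "basic_conditions g"
  shows "\<exists>C. \<forall>x y. \<bar>g (x, y)\<bar> \<le> C / (1 + \<bar>x\<bar>) \<and> \<bar>g (x, y)\<bar> \<le> C / (1 + \<bar>y\<bar>) \<and>
               \<bar>partial_x g (x, y)\<bar> \<le> C / (1 + x\<^sup>2 + y\<^sup>2) \<and> \<bar>partial_y g (x, y)\<bar> \<le> C / (1 + x\<^sup>2 + y\<^sup>2)"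
proof -
  obtain C1 where C1: "C1 \<ge> 0" "\<forall>z. \<bar>g z\<bar> \<le> C1 / (1 + norm z)"
    using decay1[OF smooth2_cont[OF s]] b unfolding basic_conditions_def by blast
  obtain C2 where C2: "C2 \<ge> 0" "\<forall>z. \<bar>partial_x g z\<bar> \<le> C2 / (1 + (norm z)\<^sup>2)"
    using decay2[OF smooth2_cont[OF smooth2_D(2)[OF s]]] b unfolding basic_conditions_def by blast
  obtain C3 where C3: "C3 \<ge> 0" "\<forall>z. \<bar>partial_y g z\<bar> \<le> C3 / (1 + (norm z)\<^sup>2)"
    using decay2[OF smooth2_cont[OF smooth2_D(3)[OF s]]] b unfolding basic_conditions_def by blast
  define C where "C = C1 + C2 + C3"
  have "\<bar>g (x, y)\<bar> \<le> C / (1 + \<bar>x\<bar>) \<and> \<bar>g (x, y)\<bar> \<le> C / (1 + \<bar>y\<bar>) \<and>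
       \<bar>partial_x g (x, y)\<bar> \<le> C / (1 + x\<^sup>2 + y\<^sup>2) \<and> \<bar>partial_y g (x, y)\<bar> \<le> C / (1 + x\<^sup>2 + y\<^sup>2)" for x y
  proof (intro conjI)
    have nx: "\<bar>x\<bar> \<le> norm (x, y)" "\<bar>y\<bar> \<le> norm (x, y)"
      using norm_fst_le[of x y] norm_snd_le[of y x] by auto
    have "\<bar>g (x, y)\<bar> \<le> C1 / (1 + norm (x, y))" using C1 by blast
    also have "\<dots> \<le> C1 / (1 + \<bar>x\<bar>)" using C1 nx by (intro divide_left_mono) auto
    also have "\<dots> \<le> C / (1 + \<bar>x\<bar>)" using C2 C3 unfolding C_def by (intro divide_right_mono) auto
    finally show "\<bar>g (x, y)\<bar> \<le> C / (1 + \<bar>x\<bar>)" .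
    have "\<bar>g (x, y)\<bar> \<le> C1 / (1 + norm (x, y))" using C1 by blast
    also have "\<dots> \<le> C1 / (1 + \<bar>y\<bar>)" using C1 nx by (intro divide_left_mono) auto
    also have "\<dots> \<le> C / (1 + \<bar>y\<bar>)" using C2 C3 unfolding C_def by (intro divide_right_mono) auto
    finally show "\<bar>g (x, y)\<bar> \<le> C / (1 + \<bar>y\<bar>)" .
    have "\<bar>partial_x g (x, y)\<bar> \<le> C2 / (1 + (norm (x, y))\<^sup>2)" using C2 by blast
    also have "\<dots> = C2 / (1 + x\<^sup>2 + y\<^sup>2)" by (simp add: normsq_pair add.assoc)
    also have "\<dots> \<le> C / (1 + x\<^sup>2 + y\<^sup>2)" using C1 C3 unfolding C_def
      by (intro divide_right_mono) (auto simp: add_pos_nonneg)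
    finally show "\<bar>partial_x g (x, y)\<bar> \<le> C / (1 + x\<^sup>2 + y\<^sup>2)" .
    have "\<bar>partial_y g (x, y)\<bar> \<le> C3 / (1 + (norm (x, y))\<^sup>2)" using C3 by blast
    also have "\<dots> = C3 / (1 + x\<^sup>2 + y\<^sup>2)" by (simp add: normsq_pair add.assoc)
    also have "\<dots> \<le> C / (1 + x\<^sup>2 + y\<^sup>2)" using C1 C2 unfolding C_def
      by (intro divide_right_mono) (auto simp: add_pos_nonneg)
    finally show "\<bar>partial_y g (x, y)\<bar> \<le> C / (1 + x\<^sup>2 + y\<^sup>2)" .
  qed
  then show ?thesis by blast
qed


lemma Yloc_add:
  assumes A: "Yloc h1 hx1 hy1 k1 k2" and B: "Yloc h2 hx2 hy2 k1 k2"
  shows "Yloc (\<lambda>x y. h1 x y + h2 x y) (\<lambda>x y. hx1 x y + hx2 x y) (\<lambda>x y. hy1 x y + hy2 x y) k1 k2"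
proof -
  interpret A: Yloc h1 hx1 hy1 k1 k2 by fact
  interpret B: Yloc h2 hx2 hy2 k1 k2 by fact
  show ?thesis
  proof (unfold_locales)
    show "k1 \<noteq> 0" "k2 \<noteq> 0" by (rule A.k1, rule A.k2)
    show "continuous_on UNIV (\<lambda>z. h1 (fst z) (snd z) + h2 (fst z) (snd z))"
      by (intro continuous_on_add A.cont_h B.cont_h)
    show "continuous_on UNIV (\<lambda>z. hy1 (fst z) (snd z) + hy2 (fst z) (snd z))"
      by (intro continuous_on_add A.cont_hy B.cont_hy)
    show "((\<lambda>t. h1 t y + h2 t y) has_real_derivative hx1 x y + hx2 x y) (at x)" for x y
      by (intro DERIV_add A.der_x B.der_x)
    show "((\<lambda>t. h1 x t + h2 x t) has_real_derivative hy1 x y + hy2 x y) (at y)" for x y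
      by (intro DERIV_add A.der_y B.der_y)
    show "\<exists>C. \<forall>x y. \<bar>h1 x y + h2 x y\<bar> \<le> C / (1 + \<bar>x\<bar>) \<and> \<bar>h1 x y + h2 x y\<bar> \<le> C / (1 + \<bar>y\<bar>) \<and>
           \<bar>hx1 x y + hx2 x y\<bar> \<le> C / (1 + x\<^sup>2 + y\<^sup>2) \<and> \<bar>hy1 x y + hy2 x y\<bar> \<le> C / (1 + x\<^sup>2 + y\<^sup>2)"
    proof (intro exI allI conjI)
      fix x y
      show "\<bar>h1 x y + h2 x y\<bar> \<le> (A.Cb + B.Cb) / (1 + \<bar>x\<bar>)"
        using A.Cb(1)[of x y] B.Cb(1)[of x y] by (simp add: add_divide_distrib)
      show "\<bar>h1 x y + h2 x y\<bar> \<le> (A.Cb + B.Cb) / (1 + \<bar>y\<bar>)"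
        using A.Cb(2)[of x y] B.Cb(2)[of x y] by (simp add: add_divide_distrib)
      show "\<bar>hx1 x y + hx2 x y\<bar> \<le> (A.Cb + B.Cb) / (1 + x\<^sup>2 + y\<^sup>2)"
        using A.Cb(3)[of x y] B.Cb(3)[of x y] by (simp add: add_divide_distrib)
      show "\<bar>hy1 x y + hy2 x y\<bar> \<le> (A.Cb + B.Cb) / (1 + x\<^sup>2 + y\<^sup>2)"
        using A.Cb(4)[of x y] B.Cb(4)[of x y] by (simp add: add_divide_distrib)
    qed
    show "\<exists>R K. \<forall>x u v A. R \<le> \<bar>x\<bar> \<longrightarrow> 0 < A \<longrightarrow> u \<le> v \<longrightarrow> (\<forall>y\<in>{u..v}. A \<le> \<bar>y\<bar>) \<longrightarrow>
       norm (integral {u..v} (\<lambda>y. of_real (hy1 x y + hy2 x y) * cis (- k2 * y))) \<le> K / (1 + x\<^sup>2 + A\<^sup>2)"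
    proof (intro exI allI impI)
      fix x u v A :: real
      assume a: "max A.Rb B.Rb \<le> \<bar>x\<bar>" "0 < A" "u \<le> v" "\<forall>y\<in>{u..v}. A \<le> \<bar>y\<bar>"
      have i1: "(\<lambda>y. of_real (hy1 x y) * cis (- k2 * y)) integrable_on {u..v}"
        by (intro integrable_continuous_interval continuous_intros A.cont_hy_y)
      have i2: "(\<lambda>y. of_real (hy2 x y) * cis (- k2 * y)) integrable_on {u..v}"
        by (intro integrable_continuous_interval continuous_intros B.cont_hy_y)
      have "integral {u..v} (\<lambda>y. of_real (hy1 x y + hy2 x y) * cis (- k2 * y)) =
          integral {u..v} (\<lambda>y. of_real (hy1 x y) * cis (- k2 * y)) + integral {u..v} (\<lambda>y. of_real (hy2 x y) * cis (- k2 * y))"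
        by (subst integral_add[OF i1 i2, symmetric]) (simp add: distrib_right)
      then have "norm (integral {u..v} (\<lambda>y. of_real (hy1 x y + hy2 x y) * cis (- k2 * y))) \<le>
          norm (integral {u..v} (\<lambda>y. of_real (hy1 x y) * cis (- k2 * y))) + norm (integral {u..v} (\<lambda>y. of_real (hy2 x y) * cis (- k2 * y)))"
        by (simp only:) (rule norm_triangle_ineq)
      also have "\<dots> \<le> A.Kb / (1 + x\<^sup>2 + A\<^sup>2) + B.Kb / (1 + x\<^sup>2 + A\<^sup>2)"
        using a by (intro add_mono A.RKb B.RKb) auto
      also have "\<dots> = (A.Kb + B.Kb) / (1 + x\<^sup>2 + A\<^sup>2)" by (simp add: add_divide_distrib)
      finally show "norm (integral {u..v} (\<lambda>y. of_real (hy1 x y + hy2 x y) * cis (- k2 * y))) \<le> (A.Kb + B.Kb) / (1 + x\<^sup>2 + A\<^sup>2)" .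
    qed
  qed
qed

lemma Good_add:
  assumes "Good h1 hx1 hy1 k1 k2" "Good h2 hx2 hy2 k1 k2"
  shows "Good (\<lambda>x y. h1 x y + h2 x y) (\<lambda>x y. hx1 x y + hx2 x y) (\<lambda>x y. hy1 x y + hy2 x y) k1 k2"
  using assms unfolding Good_def by (auto intro: Yloc_add[of _ _ _ k1 k2] Yloc_add[of _ _ _ k2 k1])


lemma cont_pair: "continuous_on UNIV g \<Longrightarrow> continuous_on S (\<lambda>z. g (fst z, snd z))"
  by (auto intro: continuous_on_subset)

lemma cont_pair_swap: "continuous_on UNIV g \<Longrightarrow> continuous_on S (\<lambda>z. g (snd z, fst z))"
proof -
  assume c: "continuous_on UNIV g"
  have "continuous_on UNIV (g \<circ> (\<lambda>z. (snd z, fst z)))"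
    by (intro continuous_on_compose continuous_intros continuous_on_subset[OF c]) auto
  then show ?thesis by (auto simp: o_def intro: continuous_on_subset)
qed

lemma cont_slice_y: "continuous_on UNIV g \<Longrightarrow> continuous_on S (\<lambda>y. g (x, y))"
proof -
  assume c: "continuous_on UNIV g"
  have "continuous_on UNIV (g \<circ> (\<lambda>y. (x, y)))"
    by (intro continuous_on_compose continuous_intros continuous_on_subset[OF c]) auto
  then show ?thesis by (auto simp: o_def intro: continuous_on_subset)
qed

lemma cont_slice_x: "continuous_on UNIV g \<Longrightarrow> continuous_on S (\<lambda>x. g (x, y))"
proof -
  assume c: "continuous_on UNIV g"
  have "continuous_on UNIV (g \<circ> (\<lambda>x. (x, y)))"
    by (intro continuous_on_compose continuous_intros continuous_on_subset[OF c]) auto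
  then show ?thesis by (auto simp: o_def intro: continuous_on_subset)
qed

lemma Yloc_smooth:
  assumes s: "smooth2 g" and b: "basic_conditions g" and k: "k1 \<noteq> 0" "k2 \<noteq> 0"
    and band: "\<exists>R K. \<forall>x u v A. R \<le> \<bar>x\<bar> \<longrightarrow> 0 < A \<longrightarrow> u \<le> v \<longrightarrow> (\<forall>y\<in>{u..v}. A \<le> \<bar>y\<bar>) \<longrightarrow>
       norm (integral {u..v} (\<lambda>y. of_real (partial_y g (x, y)) * cis (- k2 * y))) \<le> K / (1 + x\<^sup>2 + A\<^sup>2)"
  shows "Yloc (\<lambda>x y. g (x, y)) (\<lambda>x y. partial_x g (x, y)) (\<lambda>x y. partial_y g (x, y)) k1 k2"
proof (unfold_locales)
  show "k1 \<noteq> 0" "k2 \<noteq> 0" by (rule k(1), rule k(2))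
  show "continuous_on UNIV (\<lambda>z. g (fst z, snd z))" by (intro cont_pair smooth2_cont s)
  show "continuous_on UNIV (\<lambda>z. partial_y g (fst z, snd z))" by (intro cont_pair smooth2_cont smooth2_D(3) s)
  show "((\<lambda>t. g (t, y)) has_real_derivative partial_x g (x, y)) (at x)" for x y
    by (intro der_x_of smooth2_D(1) s)
  show "((\<lambda>t. g (x, t)) has_real_derivative partial_y g (x, y)) (at y)" for x y
    by (intro der_y_of smooth2_D(1) s)
  show "\<exists>C. \<forall>x y. \<bar>g (x, y)\<bar> \<le> C / (1 + \<bar>x\<bar>) \<and> \<bar>g (x, y)\<bar> \<le> C / (1 + \<bar>y\<bar>) \<and>
          \<bar>partial_x g (x, y)\<bar> \<le> C / (1 + x\<^sup>2 + y\<^sup>2) \<and> \<bar>partial_y g (x, y)\<bar> \<le> C / (1 + x\<^sup>2 + y\<^sup>2)"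
    by (rule basic_bounds[OF s b])
qed (rule band)

lemma Yloc_smooth_swap:
  assumes s: "smooth2 g" and b: "basic_conditions g" and k: "k1 \<noteq> 0" "k2 \<noteq> 0"
    and band: "\<exists>R K. \<forall>y u v A. R \<le> \<bar>y\<bar> \<longrightarrow> 0 < A \<longrightarrow> u \<le> v \<longrightarrow> (\<forall>x\<in>{u..v}. A \<le> \<bar>x\<bar>) \<longrightarrow>
       norm (integral {u..v} (\<lambda>x. of_real (partial_x g (x, y)) * cis (- k1 * x))) \<le> K / (1 + y\<^sup>2 + A\<^sup>2)"
  shows "Yloc (\<lambda>y x. g (x, y)) (\<lambda>y x. partial_y g (x, y)) (\<lambda>y x. partial_x g (x, y)) k2 k1"
proof (unfold_locales)
  show "k2 \<noteq> 0" "k1 \<noteq> 0" by (rule k(2), rule k(1))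
  show "continuous_on UNIV (\<lambda>z. g (snd z, fst z))" by (intro cont_pair_swap smooth2_cont s)
  show "continuous_on UNIV (\<lambda>z. partial_x g (snd z, fst z))" by (intro cont_pair_swap smooth2_cont smooth2_D(2) s)
  show "((\<lambda>t. g (y, t)) has_real_derivative partial_y g (y, x)) (at x)" for x y
    by (intro der_y_of smooth2_D(1) s)
  show "((\<lambda>t. g (t, x)) has_real_derivative partial_x g (y, x)) (at y)" for x y
    by (intro der_x_of smooth2_D(1) s)
  obtain C where C: "\<forall>x y. \<bar>g (x, y)\<bar> \<le> C / (1 + \<bar>x\<bar>) \<and> \<bar>g (x, y)\<bar> \<le> C / (1 + \<bar>y\<bar>) \<and>
          \<bar>partial_x g (x, y)\<bar> \<le> C / (1 + x\<^sup>2 + y\<^sup>2) \<and> \<bar>partial_y g (x, y)\<bar> \<le> C / (1 + x\<^sup>2 + y\<^sup>2)"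
    using basic_bounds[OF s b] by blast
  show "\<exists>C. \<forall>x y. \<bar>g (y, x)\<bar> \<le> C / (1 + \<bar>x\<bar>) \<and> \<bar>g (y, x)\<bar> \<le> C / (1 + \<bar>y\<bar>) \<and>
          \<bar>partial_y g (y, x)\<bar> \<le> C / (1 + x\<^sup>2 + y\<^sup>2) \<and> \<bar>partial_x g (y, x)\<bar> \<le> C / (1 + x\<^sup>2 + y\<^sup>2)"
  proof (intro exI[of _ C] allI)
    fix x y
    have e: "1 + y\<^sup>2 + x\<^sup>2 = 1 + x\<^sup>2 + (y::real)\<^sup>2" by simp
    show "\<bar>g (y, x)\<bar> \<le> C / (1 + \<bar>x\<bar>) \<and> \<bar>g (y, x)\<bar> \<le> C / (1 + \<bar>y\<bar>) \<and>
          \<bar>partial_y g (y, x)\<bar> \<le> C / (1 + x\<^sup>2 + y\<^sup>2) \<and> \<bar>partial_x g (y, x)\<bar> \<le> C / (1 + x\<^sup>2 + y\<^sup>2)"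
      using C[rule_format, of y x] unfolding e by blast
  qed
qed (rule band)

lemma deriv2_y: "deriv (deriv (\<lambda>y. g (x, y))) = (\<lambda>y. partial_y (partial_y g) (x, y))"
  by (simp add: partial_y_def)

lemma deriv2_x: "deriv (deriv (\<lambda>x. g (x, y))) = (\<lambda>x. partial_x (partial_x g) (x, y))"
  by (simp add: partial_x_def)

lemma deriv1_y: "deriv (\<lambda>y. g (x, y)) = (\<lambda>y. partial_y g (x, y))"
  by (simp add: partial_y_def)


lemma qn_band_y:
  assumes s: "smooth2 g" and b: "basic_conditions g" and v: "condition_v' g" and k2: "k2 \<noteq> 0"
  shows "\<exists>R K. \<forall>x u v A. R \<le> \<bar>x\<bar> \<longrightarrow> 0 < A \<longrightarrow> u \<le> v \<longrightarrow> (\<forall>y\<in>{u..v}. A \<le> \<bar>y\<bar>) \<longrightarrow>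
       norm (integral {u..v} (\<lambda>y. of_real (partial_y g (x, y)) * cis (- k2 * y))) \<le> K / (1 + x\<^sup>2 + A\<^sup>2)"
proof -
  obtain R B where RB: "\<forall>s. \<bar>s\<bar> \<ge> R \<longrightarrow> zeros_in_bands B (deriv (deriv (\<lambda>y. g (s, y))))"
    using v unfolding condition_v'_def by blast
  obtain C where C: "\<forall>x y. \<bar>g (x, y)\<bar> \<le> C / (1 + \<bar>x\<bar>) \<and> \<bar>g (x, y)\<bar> \<le> C / (1 + \<bar>y\<bar>) \<and>
          \<bar>partial_x g (x, y)\<bar> \<le> C / (1 + x\<^sup>2 + y\<^sup>2) \<and> \<bar>partial_y g (x, y)\<bar> \<le> C / (1 + x\<^sup>2 + y\<^sup>2)"
    using basic_bounds[OF s b] by blast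
  have "\<bar>g (0, 0)\<bar> \<le> C / (1 + \<bar>0\<bar>)" using C by blast
  then have C0: "C \<ge> 0" by simp
  show ?thesis
  proof (intro exI allI impI)
    fix x u v A :: real
    assume a: "R \<le> \<bar>x\<bar>" "0 < A" "u \<le> v" "\<forall>y\<in>{u..v}. A \<le> \<bar>y\<bar>"
    have zb: "zeros_in_bands B (\<lambda>y. partial_y (partial_y g) (x, y))"
    proof -
      have "zeros_in_bands B (deriv (deriv (\<lambda>y. g (x, y))))" using RB a(1) by blast
      then show ?thesis by (simp only: deriv2_y)
    qed
    have d: "((\<lambda>y. partial_y g (x, y)) has_real_derivative partial_y (partial_y g) (x, t)) (at t)" for t
      by (intro der_y_of smooth2_D(1) smooth2_D(3) s)
    have cg': "continuous_on UNIV (\<lambda>y. partial_y (partial_y g) (x, y))"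
      by (intro cont_slice_y smooth2_cont smooth2_D(3) s)
    have S: "\<forall>t\<in>{u..v}. \<bar>partial_y g (x, t)\<bar> \<le> C / (1 + x\<^sup>2 + A\<^sup>2)"
    proof
      fix t assume "t \<in> {u..v}"
      then have "A \<le> \<bar>t\<bar>" using a by blast
      then have "A\<^sup>2 \<le> t\<^sup>2" using a(2) by (metis abs_le_square_iff abs_of_pos)
      have "\<bar>partial_y g (x, t)\<bar> \<le> C / (1 + x\<^sup>2 + t\<^sup>2)" using C by blast
      also have "\<dots> \<le> C / (1 + x\<^sup>2 + A\<^sup>2)"
        using C0 \<open>A\<^sup>2 \<le> t\<^sup>2\<close> by (intro divide_left_mono) (auto simp: add_pos_nonneg)
      finally show "\<bar>partial_y g (x, t)\<bar> \<le> C / (1 + x\<^sup>2 + A\<^sup>2)" .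
    qed
    have "norm (integral {u..v} (\<lambda>y. of_real (partial_y g (x, y)) * cis (- k2 * y))) \<le>
        5 * ((4 / \<bar>k2\<bar> + B) * (C / (1 + x\<^sup>2 + A\<^sup>2)))"
      by (rule band_bound[OF k2 a(3) d cg' S zb])
    also have "\<dots> = (5 * ((4 / \<bar>k2\<bar> + B) * C)) / (1 + x\<^sup>2 + A\<^sup>2)" by simp
    finally show "norm (integral {u..v} (\<lambda>y. of_real (partial_y g (x, y)) * cis (- k2 * y))) \<le>
        (5 * ((4 / \<bar>k2\<bar> + B) * C)) / (1 + x\<^sup>2 + A\<^sup>2)" .
  qed
qed

lemma qn_band_x:
  assumes s: "smooth2 g" and b: "basic_conditions g" and v: "condition_v' g" and k1: "k1 \<noteq> 0"
  shows "\<exists>R K. \<forall>y u v A. R \<le> \<bar>y\<bar> \<longrightarrow> 0 < A \<longrightarrow> u \<le> v \<longrightarrow> (\<forall>x\<in>{u..v}. A \<le> \<bar>x\<bar>) \<longrightarrow>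
       norm (integral {u..v} (\<lambda>x. of_real (partial_x g (x, y)) * cis (- k1 * x))) \<le> K / (1 + y\<^sup>2 + A\<^sup>2)"
proof -
  obtain R B where RB: "\<forall>s. \<bar>s\<bar> \<ge> R \<longrightarrow> zeros_in_bands B (deriv (deriv (\<lambda>x. g (x, s))))"
    using v unfolding condition_v'_def by blast
  obtain C where C: "\<forall>x y. \<bar>g (x, y)\<bar> \<le> C / (1 + \<bar>x\<bar>) \<and> \<bar>g (x, y)\<bar> \<le> C / (1 + \<bar>y\<bar>) \<and>
          \<bar>partial_x g (x, y)\<bar> \<le> C / (1 + x\<^sup>2 + y\<^sup>2) \<and> \<bar>partial_y g (x, y)\<bar> \<le> C / (1 + x\<^sup>2 + y\<^sup>2)"
    using basic_bounds[OF s b] by blast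
  have "\<bar>g (0, 0)\<bar> \<le> C / (1 + \<bar>0\<bar>)" using C by blast
  then have C0: "C \<ge> 0" by simp
  show ?thesis
  proof (intro exI allI impI)
    fix y u v A :: real
    assume a: "R \<le> \<bar>y\<bar>" "0 < A" "u \<le> v" "\<forall>x\<in>{u..v}. A \<le> \<bar>x\<bar>"
    have zb: "zeros_in_bands B (\<lambda>x. partial_x (partial_x g) (x, y))"
    proof -
      have "zeros_in_bands B (deriv (deriv (\<lambda>x. g (x, y))))" using RB a(1) by blast
      then show ?thesis by (simp only: deriv2_x)
    qed
    have d: "((\<lambda>x. partial_x g (x, y)) has_real_derivative partial_x (partial_x g) (t, y)) (at t)" for t
      by (intro der_x_of smooth2_D(1) smooth2_D(2) s)
    have cg': "continuous_on UNIV (\<lambda>x. partial_x (partial_x g) (x, y))"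
      by (intro cont_slice_x smooth2_cont smooth2_D(2) s)
    have S: "\<forall>t\<in>{u..v}. \<bar>partial_x g (t, y)\<bar> \<le> C / (1 + y\<^sup>2 + A\<^sup>2)"
    proof
      fix t assume "t \<in> {u..v}"
      then have "A \<le> \<bar>t\<bar>" using a by blast
      then have "A\<^sup>2 \<le> t\<^sup>2" using a(2) by (metis abs_le_square_iff abs_of_pos)
      have "\<bar>partial_x g (t, y)\<bar> \<le> C / (1 + t\<^sup>2 + y\<^sup>2)" using C by blast
      also have "\<dots> \<le> C / (1 + y\<^sup>2 + A\<^sup>2)"
        using C0 \<open>A\<^sup>2 \<le> t\<^sup>2\<close> by (intro divide_left_mono) (auto simp: add_pos_nonneg)
      finally show "\<bar>partial_x g (t, y)\<bar> \<le> C / (1 + y\<^sup>2 + A\<^sup>2)" .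
    qed
    have "norm (integral {u..v} (\<lambda>x. of_real (partial_x g (x, y)) * cis (- k1 * x))) \<le>
        5 * ((4 / \<bar>k1\<bar> + B) * (C / (1 + y\<^sup>2 + A\<^sup>2)))"
      by (rule band_bound[OF k1 a(3) d cg' S zb])
    also have "\<dots> = (5 * ((4 / \<bar>k1\<bar> + B) * C)) / (1 + y\<^sup>2 + A\<^sup>2)" by simp
    finally show "norm (integral {u..v} (\<lambda>x. of_real (partial_x g (x, y)) * cis (- k1 * x))) \<le>
        (5 * ((4 / \<bar>k1\<bar> + B) * C)) / (1 + y\<^sup>2 + A\<^sup>2)" .
  qed
qed

lemma qn_Good:
  assumes q: "quasi_normal g" and k: "k1 \<noteq> 0" "k2 \<noteq> 0"
  shows "Good (\<lambda>x y. g (x, y)) (\<lambda>x y. partial_x g (x, y)) (\<lambda>x y. partial_y g (x, y)) k1 k2"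
proof -
  have s: "smooth2 g" and b: "basic_conditions g" and v: "condition_v' g"
    using q unfolding quasi_normal_def by auto
  show ?thesis
    unfolding Good_def
    using Yloc_smooth[OF s b k qn_band_y[OF s b v k(2)]] Yloc_smooth_swap[OF s b k qn_band_x[OF s b v k(1)]]
    by simp
qed


lemma tri3: "\<bar>a\<bar> \<le> p \<Longrightarrow> \<bar>b\<bar> \<le> q \<Longrightarrow> \<bar>c\<bar> \<le> r \<Longrightarrow> \<bar>a - (b + c)\<bar> \<le> p + q + (r::real)"
  by (simp add: abs_le_iff)

lemma partial_y_sum:
  assumes s: "smooth2 f" "smooth2 f1" "smooth2 f2" and eq: "\<forall>t. f (x, t) = f1 (x, t) + f2 (x, t)"
  shows "partial_y f (x, y) = partial_y f1 (x, y) + partial_y f2 (x, y)"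
proof -
  have d1: "((\<lambda>t. f (x, t)) has_real_derivative partial_y f (x, y)) (at y)"
    by (intro der_y_of smooth2_D(1) s)
  have "((\<lambda>t. f1 (x, t) + f2 (x, t)) has_real_derivative partial_y f1 (x, y) + partial_y f2 (x, y)) (at y)"
    by (intro DERIV_add der_y_of smooth2_D(1) s)
  moreover have "(\<lambda>t. f1 (x, t) + f2 (x, t)) = (\<lambda>t. f (x, t))" using eq by auto
  ultimately have d2: "((\<lambda>t. f (x, t)) has_real_derivative partial_y f1 (x, y) + partial_y f2 (x, y)) (at y)"
    by simp
  show ?thesis by (rule DERIV_unique[OF d1 d2])
qed

lemma partial_x_sum:
  assumes s: "smooth2 f" "smooth2 f1" "smooth2 f2" and eq: "\<forall>t. f (t, y) = f1 (t, y) + f2 (t, y)"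
  shows "partial_x f (x, y) = partial_x f1 (x, y) + partial_x f2 (x, y)"
proof -
  have d1: "((\<lambda>t. f (t, y)) has_real_derivative partial_x f (x, y)) (at x)"
    by (intro der_x_of smooth2_D(1) s)
  have "((\<lambda>t. f1 (t, y) + f2 (t, y)) has_real_derivative partial_x f1 (x, y) + partial_x f2 (x, y)) (at x)"
    by (intro DERIV_add der_x_of smooth2_D(1) s)
  moreover have "(\<lambda>t. f1 (t, y) + f2 (t, y)) = (\<lambda>t. f (t, y))" using eq by auto
  ultimately have d2: "((\<lambda>t. f (t, y)) has_real_derivative partial_x f1 (x, y) + partial_x f2 (x, y)) (at x)"
    by simp
  show ?thesis by (rule DERIV_unique[OF d1 d2])
qed

lemma split_Good:
  assumes qs: "quasi_split_normal f" and k: "k1 \<noteq> 0" "k2 \<noteq> 0"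
  shows "\<exists>hx hy. Good (\<lambda>x y. f (x, y)) hx hy k1 k2"
proof -
  obtain R f1 f2 where s1: "smooth2 f1" and s2: "smooth2 f2" and q1: "quasi_normal f1" and q2: "quasi_normal f2"
    and eqR: "\<forall>z. norm z \<ge> R \<longrightarrow> f z = f1 z + f2 z"
    using qs unfolding quasi_split_normal_def by blast
  have sf: "smooth2 f" and bf: "basic_conditions f" using qs unfolding quasi_split_normal_def by auto
  have b1: "basic_conditions f1" and b2: "basic_conditions f2" using q1 q2 unfolding quasi_normal_def by auto
  obtain Cf where Cf: "\<forall>x y. \<bar>f (x, y)\<bar> \<le> Cf / (1 + \<bar>x\<bar>) \<and> \<bar>f (x, y)\<bar> \<le> Cf / (1 + \<bar>y\<bar>) \<and>
          \<bar>partial_x f (x, y)\<bar> \<le> Cf / (1 + x\<^sup>2 + y\<^sup>2) \<and> \<bar>partial_y f (x, y)\<bar> \<le> Cf / (1 + x\<^sup>2 + y\<^sup>2)"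
    using basic_bounds[OF sf bf] by blast
  obtain C1 where C1: "\<forall>x y. \<bar>f1 (x, y)\<bar> \<le> C1 / (1 + \<bar>x\<bar>) \<and> \<bar>f1 (x, y)\<bar> \<le> C1 / (1 + \<bar>y\<bar>) \<and>
          \<bar>partial_x f1 (x, y)\<bar> \<le> C1 / (1 + x\<^sup>2 + y\<^sup>2) \<and> \<bar>partial_y f1 (x, y)\<bar> \<le> C1 / (1 + x\<^sup>2 + y\<^sup>2)"
    using basic_bounds[OF s1 b1] by blast
  obtain C2 where C2: "\<forall>x y. \<bar>f2 (x, y)\<bar> \<le> C2 / (1 + \<bar>x\<bar>) \<and> \<bar>f2 (x, y)\<bar> \<le> C2 / (1 + \<bar>y\<bar>) \<and>
          \<bar>partial_x f2 (x, y)\<bar> \<le> C2 / (1 + x\<^sup>2 + y\<^sup>2) \<and> \<bar>partial_y f2 (x, y)\<bar> \<le> C2 / (1 + x\<^sup>2 + y\<^sup>2)"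
    using basic_bounds[OF s2 b2] by blast
  define h0 where "h0 x y = f (x, y) - (f1 (x, y) + f2 (x, y))" for x y
  define hx0 where "hx0 x y = partial_x f (x, y) - (partial_x f1 (x, y) + partial_x f2 (x, y))" for x y
  define hy0 where "hy0 x y = partial_y f (x, y) - (partial_y f1 (x, y) + partial_y f2 (x, y))" for x y
  have cf: "continuous_on UNIV f" "continuous_on UNIV f1" "continuous_on UNIV f2"
    using sf s1 s2 by (auto intro: smooth2_cont)
  have cfx: "continuous_on UNIV (partial_x f)" "continuous_on UNIV (partial_x f1)" "continuous_on UNIV (partial_x f2)"
    using sf s1 s2 by (auto intro: smooth2_cont smooth2_D)
  have cfy: "continuous_on UNIV (partial_y f)" "continuous_on UNIV (partial_y f1)" "continuous_on UNIV (partial_y f2)"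
    using sf s1 s2 by (auto intro: smooth2_cont smooth2_D)
  have bounds: "\<exists>C. \<forall>x y. \<bar>h0 x y\<bar> \<le> C / (1 + \<bar>x\<bar>) \<and> \<bar>h0 x y\<bar> \<le> C / (1 + \<bar>y\<bar>) \<and>
          \<bar>hx0 x y\<bar> \<le> C / (1 + x\<^sup>2 + y\<^sup>2) \<and> \<bar>hy0 x y\<bar> \<le> C / (1 + x\<^sup>2 + y\<^sup>2)"
  proof (intro exI allI conjI)
    fix x y
    show "\<bar>h0 x y\<bar> \<le> (Cf + C1 + C2) / (1 + \<bar>x\<bar>)" unfolding h0_def add_divide_distrib
      using Cf C1 C2 by (intro tri3) blast+
    show "\<bar>h0 x y\<bar> \<le> (Cf + C1 + C2) / (1 + \<bar>y\<bar>)" unfolding h0_def add_divide_distrib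
      using Cf C1 C2 by (intro tri3) blast+
    show "\<bar>hx0 x y\<bar> \<le> (Cf + C1 + C2) / (1 + x\<^sup>2 + y\<^sup>2)" unfolding hx0_def add_divide_distrib[of _ _ "1 + x\<^sup>2 + y\<^sup>2"]
      using Cf C1 C2 by (intro tri3) blast+
    show "\<bar>hy0 x y\<bar> \<le> (Cf + C1 + C2) / (1 + x\<^sup>2 + y\<^sup>2)" unfolding hy0_def add_divide_distrib[of _ _ "1 + x\<^sup>2 + y\<^sup>2"]
      using Cf C1 C2 by (intro tri3) blast+
  qed
  have hy0_zero: "hy0 x y = 0" if "\<bar>R\<bar> \<le> \<bar>x\<bar>" for x y
  proof -
    have "\<forall>t. f (x, t) = f1 (x, t) + f2 (x, t)"
    proof
      fix t :: real
      have "R \<le> norm (x, t)" using that norm_fst_le[of x t] by auto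
      then show "f (x, t) = f1 (x, t) + f2 (x, t)" using eqR by blast
    qed
    then show ?thesis unfolding hy0_def using partial_y_sum[OF sf s1 s2] by simp
  qed
  have hx0_zero: "hx0 x y = 0" if "\<bar>R\<bar> \<le> \<bar>y\<bar>" for x y
  proof -
    have "\<forall>t. f (t, y) = f1 (t, y) + f2 (t, y)"
    proof
      fix t :: real
      have "R \<le> norm (t, y)" using that norm_snd_le[of y t] by auto
      then show "f (t, y) = f1 (t, y) + f2 (t, y)" using eqR by blast
    qed
    then show ?thesis unfolding hx0_def using partial_x_sum[OF sf s1 s2] by simp
  qed
  have Y0: "Yloc h0 hx0 hy0 k1 k2"
  proof (unfold_locales)
    show "k1 \<noteq> 0" "k2 \<noteq> 0" by (rule k(1), rule k(2))
    show "continuous_on UNIV (\<lambda>z. h0 (fst z) (snd z))"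
      unfolding h0_def by (intro continuous_intros cont_pair cf)
    show "continuous_on UNIV (\<lambda>z. hy0 (fst z) (snd z))"
      unfolding hy0_def by (intro continuous_intros cont_pair cfy)
    show "((\<lambda>t. h0 t y) has_real_derivative hx0 x y) (at x)" for x y
      unfolding h0_def hx0_def by (intro DERIV_diff DERIV_add der_x_of smooth2_D(1) sf s1 s2)
    show "((\<lambda>t. h0 x t) has_real_derivative hy0 x y) (at y)" for x y
      unfolding h0_def hy0_def by (intro DERIV_diff DERIV_add der_y_of smooth2_D(1) sf s1 s2)
    show "\<exists>C. \<forall>x y. \<bar>h0 x y\<bar> \<le> C / (1 + \<bar>x\<bar>) \<and> \<bar>h0 x y\<bar> \<le> C / (1 + \<bar>y\<bar>) \<and>
          \<bar>hx0 x y\<bar> \<le> C / (1 + x\<^sup>2 + y\<^sup>2) \<and> \<bar>hy0 x y\<bar> \<le> C / (1 + x\<^sup>2 + y\<^sup>2)"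
      by (rule bounds)
    show "\<exists>R K. \<forall>x u v A. R \<le> \<bar>x\<bar> \<longrightarrow> 0 < A \<longrightarrow> u \<le> v \<longrightarrow> (\<forall>y\<in>{u..v}. A \<le> \<bar>y\<bar>) \<longrightarrow>
       norm (integral {u..v} (\<lambda>y. of_real (hy0 x y) * cis (- k2 * y))) \<le> K / (1 + x\<^sup>2 + A\<^sup>2)"
      by (intro exI[of _ "\<bar>R\<bar>"] exI[of _ 0] allI impI) (simp add: hy0_zero)
  qed
  have X0: "Yloc (\<lambda>y x. h0 x y) (\<lambda>y x. hy0 x y) (\<lambda>y x. hx0 x y) k2 k1"
  proof (unfold_locales)
    show "k2 \<noteq> 0" "k1 \<noteq> 0" by (rule k(2), rule k(1))
    show "continuous_on UNIV (\<lambda>z. h0 (snd z) (fst z))"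
      unfolding h0_def by (intro continuous_intros cont_pair_swap cf)
    show "continuous_on UNIV (\<lambda>z. hx0 (snd z) (fst z))"
      unfolding hx0_def by (intro continuous_intros cont_pair_swap cfx)
    show "((\<lambda>t. h0 y t) has_real_derivative hy0 y x) (at x)" for x y
      unfolding h0_def hy0_def by (intro DERIV_diff DERIV_add der_y_of smooth2_D(1) sf s1 s2)
    show "((\<lambda>t. h0 t x) has_real_derivative hx0 y x) (at y)" for x y
      unfolding h0_def hx0_def by (intro DERIV_diff DERIV_add der_x_of smooth2_D(1) sf s1 s2)
    obtain C where C: "\<forall>x y. \<bar>h0 x y\<bar> \<le> C / (1 + \<bar>x\<bar>) \<and> \<bar>h0 x y\<bar> \<le> C / (1 + \<bar>y\<bar>) \<and>
          \<bar>hx0 x y\<bar> \<le> C / (1 + x\<^sup>2 + y\<^sup>2) \<and> \<bar>hy0 x y\<bar> \<le> C / (1 + x\<^sup>2 + y\<^sup>2)"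
      using bounds by blast
    show "\<exists>C. \<forall>x y. \<bar>h0 y x\<bar> \<le> C / (1 + \<bar>x\<bar>) \<and> \<bar>h0 y x\<bar> \<le> C / (1 + \<bar>y\<bar>) \<and>
          \<bar>hy0 y x\<bar> \<le> C / (1 + x\<^sup>2 + y\<^sup>2) \<and> \<bar>hx0 y x\<bar> \<le> C / (1 + x\<^sup>2 + y\<^sup>2)"
    proof (intro exI[of _ C] allI)
      fix x y :: real
      have e: "1 + y\<^sup>2 + x\<^sup>2 = 1 + x\<^sup>2 + y\<^sup>2" by simp
      show "\<bar>h0 y x\<bar> \<le> C / (1 + \<bar>x\<bar>) \<and> \<bar>h0 y x\<bar> \<le> C / (1 + \<bar>y\<bar>) \<and>
          \<bar>hy0 y x\<bar> \<le> C / (1 + x\<^sup>2 + y\<^sup>2) \<and> \<bar>hx0 y x\<bar> \<le> C / (1 + x\<^sup>2 + y\<^sup>2)"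
        using C[rule_format, of y x] unfolding e by blast
    qed
    show "\<exists>R K. \<forall>x u v A. R \<le> \<bar>x\<bar> \<longrightarrow> 0 < A \<longrightarrow> u \<le> v \<longrightarrow> (\<forall>y\<in>{u..v}. A \<le> \<bar>y\<bar>) \<longrightarrow>
       norm (integral {u..v} (\<lambda>y. of_real (hx0 y x) * cis (- k1 * y))) \<le> K / (1 + x\<^sup>2 + A\<^sup>2)"
      by (intro exI[of _ "\<bar>R\<bar>"] exI[of _ 0] allI impI) (simp add: hx0_zero)
  qed
  have G0: "Good h0 hx0 hy0 k1 k2" unfolding Good_def using Y0 X0 by simp
  have G12: "Good (\<lambda>x y. f1 (x, y) + f2 (x, y)) (\<lambda>x y. partial_x f1 (x, y) + partial_x f2 (x, y))
      (\<lambda>x y. partial_y f1 (x, y) + partial_y f2 (x, y)) k1 k2"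
    by (rule Good_add[OF qn_Good[OF q1 k] qn_Good[OF q2 k]])
  have "Good (\<lambda>x y. h0 x y + (f1 (x, y) + f2 (x, y))) (\<lambda>x y. hx0 x y + (partial_x f1 (x, y) + partial_x f2 (x, y)))
      (\<lambda>x y. hy0 x y + (partial_y f1 (x, y) + partial_y f2 (x, y))) k1 k2"
    by (rule Good_add[OF G0 G12])
  moreover have "(\<lambda>x y. h0 x y + (f1 (x, y) + f2 (x, y))) = (\<lambda>x y. f (x, y))"
    unfolding h0_def by simp
  ultimately show ?thesis by auto
qed


theorem lemma13:
  fixes f :: "real \<times> real \<Rightarrow> real" and k1 k2 :: real
  assumes "smooth2 f"
    and "quasi_normal f \<or> quasi_split_normal f"
    and "k1 \<noteq> 0" and "k2 \<noteq> 0"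
  shows "(\<forall>y. ((\<lambda>r. integral {-r..r} (\<lambda>x. complex_of_real (f (x, y)) * cis (- k1 * x)))
                   \<longlongrightarrow> fourier_x f k1 y) at_top)
       \<and> (\<forall>x. ((\<lambda>r. integral {-r..r} (\<lambda>y. complex_of_real (f (x, y)) * cis (- k2 * y)))
                   \<longlongrightarrow> fourier_y f x k2) at_top)
       \<and> (\<exists>L. has_improper_integral_R (\<lambda>y. fourier_x f k1 y * cis (- k2 * y)) L
             \<and> has_improper_integral_R (\<lambda>x. fourier_y f x k2 * cis (- k1 * x)) L
             \<and> ((\<lambda>p. integral {- fst p..fst p}
                        (\<lambda>y. integral {- snd p..snd p}
                           (\<lambda>x. complex_of_real (f (x, y)) * cis (- k1 * x) * cis (- k2 * y))))
                 \<longlongrightarrow> L) (at_top \<times>\<^sub>F at_top))"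
proof -
  obtain hx hy where G: "Good (\<lambda>x y. f (x, y)) hx hy k1 k2"
    using assms(2)
  proof
    assume "quasi_normal f"
    then show ?thesis using qn_Good[OF _ assms(3,4)] that by blast
  next
    assume "quasi_split_normal f"
    then show ?thesis using split_Good[OF _ assms(3,4)] that by blast
  qed
  interpret G: Good "\<lambda>x y. f (x, y)" hx hy k1 k2 by (rule G)
  have C: "(\<forall>y. ((\<lambda>r. integral {-r..r} (\<lambda>x. of_real (f (x, y)) * cis (- k1 * x))) \<longlongrightarrow> G.Y.Fx y) at_top)
   \<and> (\<forall>x. ((\<lambda>r. integral {-r..r} (\<lambda>y. of_real (f (x, y)) * cis (- k2 * y))) \<longlongrightarrow> G.X.Fx x) at_top)
   \<and> has_improper_integral_R (\<lambda>y. G.Y.Fx y * cis (- k2 * y)) G.Lim4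
   \<and> has_improper_integral_R (\<lambda>x. G.X.Fx x * cis (- k1 * x)) G.Lim4
   \<and> ((\<lambda>p. integral {- fst p..fst p} (\<lambda>y. integral {- snd p..snd p}
        (\<lambda>x. of_real (f (x, y)) * cis (- k1 * x) * cis (- k2 * y)))) \<longlongrightarrow> G.Lim4) (at_top \<times>\<^sub>F at_top)"
    using G.conclusion by simp
  have Fx: "fourier_x f k1 y = G.Y.Fx y" for y
    unfolding fourier_x_def using C by (intro tendsto_Lim) auto
  have Fy: "fourier_y f x k2 = G.X.Fx x" for x
    unfolding fourier_y_def using C by (intro tendsto_Lim) auto
  show ?thesis
    unfolding Fx Fy using C by blast
qed


end
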